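(* Let $M\ge1$ and let $\mathbf a$ and $\mathbf b$ be distinct words in $\mathcal A_M$ such that $J_{\mathbf b}\subset J_{\mathbf a}$. Then there is a word $\mathbf c\in\mathcal A_1$ such that $\mathbf b=\mathbf a\circ\mathbf c$.
   Context: Order and word operations. Words over $\{0,\dots,M\}$ and sequences in $\Omega_M=\{0,\dots,M\}^{\mathbb N}$ are ordered lexicographically; for words, $\mathbf c\prec\mathbf d$ iff $\mathbf c0^\infty\prec\mathbf d0^\infty$. For a word $c_1\dots c_k$: - if $c_k<M$, then $c_1\dots c_k^+=c_1\dots c_{k-1}(c_k+1)$; - $\overline{c_1\dots c_k}=(M-c_1)\dots(M-c_k)$. Quasi-greedy expansion. For $q\in(1,M+1]$, $\alpha(q)$ is the lexicographically largest sequence in $\Omega_M$ not ending in $0^\infty$ with $\sum\alpha_i(q)q^{-i}=1$. Fundamental words. A word $a_1\dots a_m$ ($m\ge2$) is fundamental if $\overline{a_1\dots a_{m-i}}\preceq a_{i+1}\dots a_m\prec a_1\dots a_{m-i}$ for $1\le i<m$. When $M\ge2$, a letter $a_1$ is fundamental if $M-a_1\le a_1<M$. $\mathcal A_M$ is the set of fundamental words, and $\mathcal A_1$ is the case $M=1$ (such words begin with $1$). Fundamental intervals. For $\mathbf a\in\mathcal A_M$, $J_{\mathbf a}=[q_L(\mathbf a),q_R(\mathbf a)]$, where $\alpha(q_L(\mathbf a))=\mathbf a^\infty$ and $\alpha(q_R(\mathbf a))=\mathbf a^+(\overline{\mathbf a})^\infty$. The graph. Let $G$ have vertices Start, $A$,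 $B$ and edges - $e_0$: Start$\to A$, - $e_1$: $A\to B$, - $e_2$: $B\to B$, - $e_3$: $B\to A$, - $e_4$: $A\to A$. It carries two labelings: - $\mathcal L_{\mathbf a}$: $e_0,e_3\mapsto\mathbf a^+$; $e_1\mapsto\overline{\mathbf a^+}$; $e_2\mapsto\mathbf a$; $e_4\mapsto\overline{\mathbf a}$; - $\mathcal L^*$: $e_0,e_3,e_4\mapsto1$; $e_1,e_2\mapsto0$. Composition. For a path $e_{i_1}\dots e_{i_k}$ with $i_1=0$, let $\Phi_{\mathbf a}$ map the block word $\mathcal L_{\mathbf a}(e_{i_1})\cdots\mathcal L_{\mathbf a}(e_{i_k})$ to $\mathcal L^*(e_{i_1}\dots e_{i_k})$. For $\mathbf c\in\mathcal A_1$, $\mathbf a\circ\mathbf c:=\Phi_{\mathbf a}^{-1}(\mathbf c)$ is the unique such block word with image $\mathbf c$. *)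

theory Defs
  imports Complex_Main
begin

text \<open>Sequences in Omega_M are functions nat => nat (index 0 = first digit);
words are nat lists.\<close>

definition in_Omega :: "nat \<Rightarrow> (nat \<Rightarrow> nat) \<Rightarrow> bool" where
  "in_Omega M s \<longleftrightarrow> (\<forall>i. s i \<le> M)"

definition seq_less :: "(nat \<Rightarrow> nat) \<Rightarrow> (nat \<Rightarrow> nat) \<Rightarrow> bool" where
  "seq_less s t \<longleftrightarrow> (\<exists>n. (\<forall>i<n. s i = t i) \<and> s n < t n)"

definition seq_le :: "(nat \<Rightarrow> nat) \<Rightarrow> (nat \<Rightarrow> nat) \<Rightarrow> bool" where
  "seq_le s t \<longleftrightarrow> s = t \<or> seq_less s t"

definition pad0 :: "nat list \<Rightarrow> nat \<Rightarrow> nat" where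
  "pad0 c = (\<lambda>i. if i < length c then c ! i else 0)"

definition word_less :: "nat list \<Rightarrow> nat list \<Rightarrow> bool" where
  "word_less c d \<longleftrightarrow> seq_less (pad0 c) (pad0 d)"

definition word_le :: "nat list \<Rightarrow> nat list \<Rightarrow> bool" where
  "word_le c d \<longleftrightarrow> seq_le (pad0 c) (pad0 d)"

definition word_plus :: "nat list \<Rightarrow> nat list" where
  "word_plus c = butlast c @ [last c + 1]"

definition word_bar :: "nat \<Rightarrow> nat list \<Rightarrow> nat list" where
  "word_bar M c = map (\<lambda>x. M - x) c"

text \<open>c^\<infinity> for a nonempty word c\<close>
definition per :: "nat list \<Rightarrow> nat \<Rightarrow> nat" where
  "per c = (\<lambda>i. c ! (i mod length c))"

definition prefix_per :: "nat list \<Rightarrow> nat list \<Rightarrow> nat \<Rightarrow> nat" where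
  "prefix_per u v = (\<lambda>i. if i < length u then u ! i else per v (i - length u))"

definition not_ending_0 :: "(nat \<Rightarrow> nat) \<Rightarrow> bool" where
  "not_ending_0 s \<longleftrightarrow> (\<forall>n. \<exists>i\<ge>n. s i \<noteq> 0)"

definition expands_one :: "real \<Rightarrow> (nat \<Rightarrow> nat) \<Rightarrow> bool" where
  "expands_one q s \<longleftrightarrow> (\<lambda>i. real (s i) / q ^ Suc i) sums 1"

definition is_quasi_greedy :: "nat \<Rightarrow> real \<Rightarrow> (nat \<Rightarrow> nat) \<Rightarrow> bool" where
  "is_quasi_greedy M q s \<longleftrightarrow>
     in_Omega M s \<and> not_ending_0 s \<and> expands_one q s \<and>
     (\<forall>t. in_Omega M t \<and> not_ending_0 t \<and> expands_one q t \<longrightarrow> seq_le t s)"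

definition alpha :: "nat \<Rightarrow> real \<Rightarrow> (nat \<Rightarrow> nat)" where
  "alpha M q = (THE s. is_quasi_greedy M q s)"

definition fundamental :: "nat \<Rightarrow> nat list \<Rightarrow> bool" where
  "fundamental M a \<longleftrightarrow> set a \<subseteq> {0..M} \<and>
     ((length a \<ge> 2 \<and>
       (\<forall>i. 1 \<le> i \<and> i < length a \<longrightarrow>
          word_le (word_bar M (take (length a - i) a)) (drop i a) \<and>
          word_less (drop i a) (take (length a - i) a)))
      \<or> (M \<ge> 2 \<and> length a = 1 \<and> M - a ! 0 \<le> a ! 0 \<and> a ! 0 < M))"

definition qL :: "nat \<Rightarrow> nat list \<Rightarrow> real" where
  "qL M a = (THE q. 1 < q \<and> q \<le> real M + 1 \<and> alpha M q = per a)"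

definition qR :: "nat \<Rightarrow> nat list \<Rightarrow> real" where
  "qR M a = (THE q. 1 < q \<and> q \<le> real M + 1 \<and>
                    alpha M q = prefix_per (word_plus a) (word_bar M a))"

definition J :: "nat \<Rightarrow> nat list \<Rightarrow> real set" where
  "J M a = {qL M a .. qR M a}"

text \<open>The graph G: vertices Start = 0, A = 1, B = 2; edges e_0..e_4 encoded as 0..4.\<close>
definition edge_src :: "nat \<Rightarrow> nat" where
  "edge_src e = (if e = 0 then 0 else if e = 1 then 1 else if e = 2 then 2
                 else if e = 3 then 2 else 1)"

definition edge_tgt :: "nat \<Rightarrow> nat" where
  "edge_tgt e = (if e = 0 then 1 else if e = 1 then 2 else if e = 2 then 2
                 else if e = 3 then 1 else 1)"

definition G_path :: "nat list \<Rightarrow> bool" where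
  "G_path p \<longleftrightarrow> p \<noteq> [] \<and> hd p = 0 \<and> set p \<subseteq> {0..4} \<and>
     (\<forall>j. Suc j < length p \<longrightarrow> edge_tgt (p ! j) = edge_src (p ! Suc j))"

definition label_a :: "nat \<Rightarrow> nat list \<Rightarrow> nat \<Rightarrow> nat list" where
  "label_a M a e = (if e = 0 \<or> e = 3 then word_plus a
                    else if e = 1 then word_bar M (word_plus a)
                    else if e = 2 then a
                    else word_bar M a)"

definition label_star :: "nat \<Rightarrow> nat" where
  "label_star e = (if e = 0 \<or> e = 3 \<or> e = 4 then 1 else 0)"

definition compose :: "nat \<Rightarrow> nat list \<Rightarrow> nat list \<Rightarrow> nat list" where
  "compose M a c = concat (map (label_a M a)
                     (THE p. G_path p \<and> map label_star p = c))"

end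

theory Submission
  imports Defs
begin


definition shift :: "(nat \<Rightarrow> nat) \<Rightarrow> nat \<Rightarrow> nat \<Rightarrow> nat" where
  "shift s k = (\<lambda>i. s (i + k))"

definition conc :: "nat list \<Rightarrow> (nat \<Rightarrow> nat) \<Rightarrow> nat \<Rightarrow> nat" where
  "conc u s = (\<lambda>i. if i < length u then u ! i else s (i - length u))"

definition llt :: "nat list \<Rightarrow> nat list \<Rightarrow> bool" where
  "llt u v \<longleftrightarrow> length u = length v \<and> (\<exists>j<length u. (\<forall>i<j. u!i = v!i) \<and> u!j < v!j)"

definition lle :: "nat list \<Rightarrow> nat list \<Rightarrow> bool" where
  "lle u v \<longleftrightarrow> u = v \<or> llt u v"

definition sbar :: "nat \<Rightarrow> (nat \<Rightarrow> nat) \<Rightarrow> nat \<Rightarrow> nat" where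
  "sbar M s = (\<lambda>i. M - s i)"

lemma shift_apply[simp]: "shift s k i = s (i + k)" by (simp add: shift_def)
lemma shift_shift[simp]: "shift (shift s k) l = shift s (k + l)"
  by (simp add: shift_def fun_eq_iff ac_simps)
lemma shift_0[simp]: "shift s 0 = s" by (simp add: shift_def fun_eq_iff)

lemma conc_Nil[simp]: "conc [] s = s" by (simp add: conc_def)
lemma conc_append: "conc (u @ v) s = conc u (conc v s)"
  by (auto simp: conc_def fun_eq_iff nth_append)
lemma shift_conc: "shift (conc u s) (length u) = s"
  by (simp add: conc_def fun_eq_iff)
lemma shift_conc_le: "k \<le> length u \<Longrightarrow> shift (conc u s) k = conc (drop k u) s"
  by (auto simp: conc_def fun_eq_iff add.commute)
lemma conc_shift: "s = conc (map s [0..<r]) (shift s r)"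
  by (auto simp: conc_def fun_eq_iff)
lemma shift_conc_ge: "length u \<le> k \<Longrightarrow> shift (conc u s) k = shift s (k - length u)"
  by (auto simp: conc_def fun_eq_iff)

lemma seq_less_irrefl: "\<not> seq_less s s"
  by (auto simp: seq_less_def)

lemma seq_less_trans: "seq_less s t \<Longrightarrow> seq_less t u \<Longrightarrow> seq_less s u"
  unfolding seq_less_def
proof (elim exE conjE)
  fix n m assume a: "\<forall>i<n. s i = t i" "s n < t n" "\<forall>i<m. t i = u i" "t m < u m"
  show "\<exists>n. (\<forall>i<n. s i = u i) \<and> s n < u n"
  proof (cases "n < m")
    case True then show ?thesis using a by (intro exI[of _ n]) auto
  next
    case False
    show ?thesis
    proof (cases "n = m")
      case True then show ?thesis using a by (intro exI[of _ n]) auto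
    next
      case False
      with \<open>\<not> n < m\<close> have "m < n" by simp
      then show ?thesis using a by (intro exI[of _ m]) auto
    qed
  qed
qed

lemma seq_less_asym: "seq_less s t \<Longrightarrow> \<not> seq_less t s"
  using seq_less_trans seq_less_irrefl by blast

lemma seq_total: "seq_less s t \<or> s = t \<or> seq_less t s"
proof (cases "s = t")
  case False
  then obtain i where "s i \<noteq> t i" by auto
  define n where "n = (LEAST i. s i \<noteq> t i)"
  have n1: "s n \<noteq> t n" unfolding n_def by (rule LeastI) fact
  have n2: "\<forall>i<n. s i = t i" unfolding n_def using not_less_Least by blast
  show ?thesis
  proof (cases "s n < t n")
    case True then show ?thesis using n2 unfolding seq_less_def by auto
  next
    case False then have "t n < s n" using n1 by simp
    then show ?thesis using n2 unfolding seq_less_def by (metis)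
  qed
qed simp

lemma seq_le_refl[simp]: "seq_le s s" by (simp add: seq_le_def)
lemma seq_le_trans: "seq_le s t \<Longrightarrow> seq_le t u \<Longrightarrow> seq_le s u"
  unfolding seq_le_def using seq_less_trans by blast
lemma seq_le_less_trans: "seq_le s t \<Longrightarrow> seq_less t u \<Longrightarrow> seq_less s u"
  unfolding seq_le_def using seq_less_trans by blast
lemma seq_less_le_trans: "seq_less s t \<Longrightarrow> seq_le t u \<Longrightarrow> seq_less s u"
  unfolding seq_le_def using seq_less_trans by blast
lemma seq_le_antisym: "seq_le s t \<Longrightarrow> seq_le t s \<Longrightarrow> s = t"
  unfolding seq_le_def using seq_less_asym by blast
lemma seq_not_less: "\<not> seq_less s t \<longleftrightarrow> seq_le t s"
  unfolding seq_le_def using seq_total seq_less_asym by blast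
lemma seq_not_le: "\<not> seq_le s t \<longleftrightarrow> seq_less t s"
  using seq_not_less by blast
lemma seq_less_imp_le: "seq_less s t \<Longrightarrow> seq_le s t" by (simp add: seq_le_def)

lemma seq_less_first: "s 0 < t 0 \<Longrightarrow> seq_less s t"
  unfolding seq_less_def by (intro exI[of _ 0]) auto

lemma llt_seq: "llt u v \<longleftrightarrow> length u = length v \<and> seq_less (conc u (\<lambda>_. 0)) (conc v (\<lambda>_. 0))"
proof
  assume "llt u v"
  then obtain j where j: "length u = length v" "j < length u" "\<forall>i<j. u!i = v!i" "u!j < v!j"
    unfolding llt_def by blast
  show "length u = length v \<and> seq_less (conc u (\<lambda>_. 0)) (conc v (\<lambda>_. 0))"
    unfolding seq_less_def using j by (intro conjI exI[of _ j]) (auto simp: conc_def)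
next
  assume h: "length u = length v \<and> seq_less (conc u (\<lambda>_. 0)) (conc v (\<lambda>_. 0))"
  then obtain n where n: "\<forall>i<n. conc u (\<lambda>_. 0) i = conc v (\<lambda>_. 0) i" "conc u (\<lambda>_. 0) n < conc v (\<lambda>_. 0) n"
    unfolding seq_less_def by blast
  have "n < length u"
  proof (rule ccontr)
    assume "\<not> n < length u"
    then show False using n(2) h by (simp add: conc_def)
  qed
  then show "llt u v" unfolding llt_def using h n
    by (intro conjI exI[of _ n]) (auto simp: conc_def)
qed

lemma conc_eq_prefix: "length u = length v \<Longrightarrow> (\<And>i. i < length u \<Longrightarrow> conc u s i = conc v t i) \<Longrightarrow> u = v"
proof (rule nth_equalityI)
  fix i assume "length u = length v" "\<And>i. i < length u \<Longrightarrow> conc u s i = conc v t i" "i < length u"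
  then show "u!i = v!i" by (metis conc_def)
qed

lemma conc0_eq: "length u = length v \<Longrightarrow> conc u (\<lambda>_. 0) = conc v (\<lambda>_. 0) \<Longrightarrow> u = v"
  using conc_eq_prefix by metis

lemma llt_irrefl: "\<not> llt u u" by (simp add: llt_seq seq_less_irrefl)

lemma llt_trans: "llt u v \<Longrightarrow> llt v w \<Longrightarrow> llt u w"
  unfolding llt_seq using seq_less_trans by auto

lemma llt_asym: "llt u v \<Longrightarrow> \<not> llt v u"
  using llt_trans llt_irrefl by blast

lemma llt_total: "length u = length v \<Longrightarrow> llt u v \<or> u = v \<or> llt v u"
  unfolding llt_seq using seq_total conc0_eq by metis

lemma lle_refl[simp]: "lle u u" by (simp add: lle_def)
lemma lle_trans: "lle u v \<Longrightarrow> lle v w \<Longrightarrow> lle u w"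
  unfolding lle_def using llt_trans by blast
lemma lle_llt_trans: "lle u v \<Longrightarrow> llt v w \<Longrightarrow> llt u w"
  unfolding lle_def using llt_trans by blast
lemma llt_lle_trans: "llt u v \<Longrightarrow> lle v w \<Longrightarrow> llt u w"
  unfolding lle_def using llt_trans by blast
lemma lle_antisym: "lle u v \<Longrightarrow> lle v u \<Longrightarrow> u = v"
  unfolding lle_def using llt_asym by blast
lemma llt_not: "length u = length v \<Longrightarrow> \<not> llt u v \<longleftrightarrow> lle v u"
  unfolding lle_def using llt_total llt_asym by blast
lemma lle_len: "lle u v \<Longrightarrow> length u = length v"
  unfolding lle_def llt_def by auto
lemma llt_len: "llt u v \<Longrightarrow> length u = length v"
  unfolding llt_def by auto

lemma seq_less_conc:
  assumes "length u = length v"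
  shows "seq_less (conc u s) (conc v t) \<longleftrightarrow> llt u v \<or> (u = v \<and> seq_less s t)"
proof
  assume "seq_less (conc u s) (conc v t)"
  then obtain n where n: "\<forall>i<n. conc u s i = conc v t i" "conc u s n < conc v t n"
    unfolding seq_less_def by blast
  show "llt u v \<or> (u = v \<and> seq_less s t)"
  proof (cases "n < length u")
    case True
    then have "llt u v" using n assms unfolding llt_def conc_def
      by (intro conjI exI[of _ n]) auto
    then show ?thesis by simp
  next
    case False
    have "u = v" using n(1) False assms conc_eq_prefix[of u v s t] by auto
    moreover have "seq_less s t" unfolding seq_less_def
    proof (intro exI[of _ "n - length u"] conjI allI impI)
      fix i assume "i < n - length u"
      then show "s i = t i" using n(1)[rule_format, of "i + length u"] assms by (auto simp: conc_def)
    next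
      show "s (n - length u) < t (n - length u)" using n(2) False assms by (auto simp: conc_def)
    qed
    ultimately show ?thesis by simp
  qed
next
  assume "llt u v \<or> (u = v \<and> seq_less s t)"
  then show "seq_less (conc u s) (conc v t)"
  proof
    assume "llt u v"
    then obtain j where j: "j < length u" "\<forall>i<j. u!i = v!i" "u!j < v!j" unfolding llt_def by blast
    show ?thesis unfolding seq_less_def using j assms
      by (intro exI[of _ j]) (auto simp: conc_def)
  next
    assume "u = v \<and> seq_less s t"
    then obtain n where n: "u = v" "\<forall>i<n. s i = t i" "s n < t n" unfolding seq_less_def by blast
    show ?thesis unfolding seq_less_def using n
      by (intro exI[of _ "n + length u"]) (auto simp: conc_def)
  qed
qed

lemma seq_le_conc:
  assumes "length u = length v"
  shows "seq_le (conc u s) (conc v t) \<longleftrightarrow> llt u v \<or> (u = v \<and> seq_le s t)"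
proof -
  have e: "conc u s = conc v t \<longleftrightarrow> u = v \<and> s = t"
  proof
    assume h: "conc u s = conc v t"
    have "u = v" using assms h conc_eq_prefix[of u v s t] by auto
    moreover have "s = t" using arg_cong[OF h, of "\<lambda>f. shift f (length u)"] \<open>u = v\<close>
      by (simp only: shift_conc)
    ultimately show "u = v \<and> s = t" by simp
  qed simp
  show ?thesis unfolding seq_le_def using seq_less_conc[OF assms] e by auto
qed

lemma seq_less_conc_same: "seq_less (conc u s) (conc u t) \<longleftrightarrow> seq_less s t"
  using seq_less_conc[of u u] llt_irrefl by auto
lemma seq_le_conc_same: "seq_le (conc u s) (conc u t) \<longleftrightarrow> seq_le s t"
  using seq_le_conc[of u u] llt_irrefl by auto

lemma word_less_llt: "length u = length v \<Longrightarrow> word_less u v \<longleftrightarrow> llt u v"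
proof -
  assume l: "length u = length v"
  have "pad0 u = conc u (\<lambda>_. 0)" "pad0 v = conc v (\<lambda>_. 0)"
    by (auto simp: pad0_def conc_def fun_eq_iff)
  then show ?thesis unfolding word_less_def using seq_less_conc[OF l] seq_less_irrefl by auto
qed

lemma word_le_lle: "length u = length v \<Longrightarrow> word_le u v \<longleftrightarrow> lle u v"
proof -
  assume l: "length u = length v"
  have p: "pad0 u = conc u (\<lambda>_. 0)" "pad0 v = conc v (\<lambda>_. 0)"
    by (auto simp: pad0_def conc_def fun_eq_iff)
  show ?thesis unfolding word_le_def lle_def p using seq_le_conc[OF l] by auto
qed

lemma llt_append_cases: "llt (u @ v) (u' @ v') \<Longrightarrow> length u = length u' \<Longrightarrow> llt u u' \<or> (u = u' \<and> llt v v')"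
proof -
  assume h: "llt (u @ v) (u' @ v')" and l: "length u = length u'"
  have "seq_less (conc (u@v) (\<lambda>_. 0)) (conc (u'@v') (\<lambda>_. 0))"
    using h seq_less_conc llt_len by blast
  then have "seq_less (conc u (conc v (\<lambda>_. 0))) (conc u' (conc v' (\<lambda>_. 0)))"
    by (simp add: conc_append)
  then have "llt u u' \<or> (u = u' \<and> seq_less (conc v (\<lambda>_. 0)) (conc v' (\<lambda>_. 0)))"
    using seq_less_conc[OF l] by blast
  moreover have "length v = length v'" using h l llt_len by fastforce
  ultimately show ?thesis using seq_less_conc seq_less_irrefl by blast
qed

lemma lle_append_cases: "lle (u @ v) (u' @ v') \<Longrightarrow> length u = length u' \<Longrightarrow> llt u u' \<or> (u = u' \<and> lle v v')"
  unfolding lle_def using llt_append_cases by auto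


lemma llt_append1:
  assumes "llt u u'" "length v = length v'" shows "llt (u @ v) (u' @ v')"
proof -
  have l: "length u = length u'" using assms(1) llt_len by blast
  have "seq_less (conc u (conc v (\<lambda>_. 0))) (conc u' (conc v' (\<lambda>_. 0)))"
    using seq_less_conc[OF l] assms(1) by blast
  then show ?thesis unfolding llt_seq using l assms(2) by (simp add: conc_append)
qed

lemma llt_append2: "lle u u' \<Longrightarrow> llt v v' \<Longrightarrow> llt (u @ v) (u' @ v')"
proof -
  assume a: "lle u u'" "llt v v'"
  show ?thesis
  proof (cases "u = u'")
    case True
    then show ?thesis using a(2) unfolding llt_seq by (simp add: conc_append seq_less_conc_same)
  next
    case False
    then have "llt u u'" using a(1) by (simp add: lle_def)
    then show ?thesis using llt_append1 llt_len a(2) by blast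
  qed
qed

lemma lle_append: "lle u u' \<Longrightarrow> lle v v' \<Longrightarrow> lle (u @ v) (u' @ v')"
  by (metis lle_def llt_append1 llt_append2 lle_len)

lemma word_bar_len[simp]: "length (word_bar M u) = length u" by (simp add: word_bar_def)
lemma word_bar_nth[simp]: "i < length u \<Longrightarrow> word_bar M u ! i = M - u ! i" by (simp add: word_bar_def)
lemma word_bar_append[simp]: "word_bar M (u @ v) = word_bar M u @ word_bar M v" by (simp add: word_bar_def)
lemma word_bar_take: "word_bar M (take k u) = take k (word_bar M u)" by (simp add: word_bar_def take_map)
lemma word_bar_drop: "word_bar M (drop k u) = drop k (word_bar M u)" by (simp add: word_bar_def drop_map)
lemma word_bar_Nil[simp]: "word_bar M [] = []" by (simp add: word_bar_def)
lemma word_bar_Cons[simp]: "word_bar M (x # u) = (M - x) # word_bar M u" by (simp add: word_bar_def)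
lemma word_bar_bar: "set u \<subseteq> {0..M} \<Longrightarrow> word_bar M (word_bar M u) = u"
  by (induct u) auto

lemma llt_bar: "llt u v \<Longrightarrow> set v \<subseteq> {0..M} \<Longrightarrow> llt (word_bar M v) (word_bar M u)"
proof -
  assume h: "llt u v" "set v \<subseteq> {0..M}"
  then obtain j where j: "length u = length v" "j < length u" "\<forall>i<j. u!i = v!i" "u!j < v!j"
    unfolding llt_def by blast
  have "v!j \<le> M" using h(2) j nth_mem by fastforce
  then show ?thesis unfolding llt_def using j by (intro conjI exI[of _ j]) auto
qed

lemma lle_bar: "lle u v \<Longrightarrow> set v \<subseteq> {0..M} \<Longrightarrow> lle (word_bar M v) (word_bar M u)"
  unfolding lle_def using llt_bar by blast

lemma word_plus_len[simp]: "u \<noteq> [] \<Longrightarrow> length (word_plus u) = length u"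
  by (simp add: word_plus_def)

lemma word_plus_append: "v \<noteq> [] \<Longrightarrow> word_plus (u @ v) = u @ word_plus v"
  by (simp add: word_plus_def butlast_append)

lemma word_plus_split: "k < length u \<Longrightarrow> word_plus u = take k u @ word_plus (drop k u)"
proof -
  assume k: "k < length u"
  have ne: "drop k u \<noteq> []" using k by simp
  have "word_plus (take k u @ drop k u) = take k u @ word_plus (drop k u)"
    by (rule word_plus_append[OF ne])
  then show ?thesis by simp
qed

lemma take_word_plus: "k < length u \<Longrightarrow> take k (word_plus u) = take k u"
proof -
  assume k: "k < length u"
  have l: "length (take k u) = k" using k by simp
  show ?thesis using word_plus_split[OF k] l by (metis append_eq_conv_conj)
qed

lemma drop_word_plus: "k < length u \<Longrightarrow> drop k (word_plus u) = word_plus (drop k u)"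
proof -
  assume k: "k < length u"
  have l: "length (take k u) = k" using k by simp
  show ?thesis using word_plus_split[OF k] l by (metis append_eq_conv_conj)
qed

lemma word_plus_nth_last: "u \<noteq> [] \<Longrightarrow> word_plus u ! (length u - 1) = u ! (length u - 1) + 1"
  by (simp add: word_plus_def nth_append last_conv_nth)

lemma word_plus_nth_other: "i < length u - 1 \<Longrightarrow> word_plus u ! i = u ! i"
  by (simp add: word_plus_def nth_append nth_butlast)

lemma llt_plus: "u \<noteq> [] \<Longrightarrow> llt u (word_plus u)"
proof -
  assume ne: "u \<noteq> []"
  have "word_plus u ! (length u - 1) = u ! (length u - 1) + 1" by (rule word_plus_nth_last[OF ne])
  moreover have "\<forall>i<length u - 1. u ! i = word_plus u ! i" using word_plus_nth_other by metis
  ultimately show ?thesis unfolding llt_def using ne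
    by (intro conjI exI[of _ "length u - 1"]) auto
qed

lemma llt_plus_le: "llt u v \<Longrightarrow> lle (word_plus u) v"
proof -
  assume h: "llt u v"
  then obtain j where j: "length u = length v" "j < length u" "\<forall>i<j. u!i = v!i" "u!j < v!j"
    unfolding llt_def by blast
  have ne: "u \<noteq> []" using j by auto
  have wl: "word_plus u ! (length u - 1) = u ! (length u - 1) + 1" by (rule word_plus_nth_last[OF ne])
  have wo: "\<And>i. i < length u - 1 \<Longrightarrow> word_plus u ! i = u ! i" using word_plus_nth_other by metis
  have len: "length (word_plus u) = length v" using j ne by simp
  show ?thesis
  proof (cases "j = length u - 1")
    case jl: True
    show ?thesis
    proof (cases "u!j + 1 = v!j")
      case True
      have "word_plus u = v"
      proof (rule nth_equalityI)
        show "length (word_plus u) = length v" by (fact len)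
        fix i assume "i < length (word_plus u)"
        then have "i < length u" using ne by simp
        show "word_plus u ! i = v ! i"
        proof (cases "i = length u - 1")
          case True then show ?thesis using wl jl \<open>u!j + 1 = v!j\<close> by simp
        next
          case False then have "i < length u - 1" "i < j" using \<open>i < length u\<close> jl by auto
          then show ?thesis using wo j(3) by simp
        qed
      qed
      then show ?thesis by simp
    next
      case False
      have "word_plus u ! j < v ! j" using wl jl False j(4) by simp
      moreover have "\<forall>i<j. word_plus u ! i = v ! i" using wo j(3) jl by simp
      ultimately show ?thesis unfolding lle_def llt_def using len ne j(2)
        by (intro disjI2 conjI exI[of _ j]) auto
    qed
  next
    case False
    then have jj: "j < length u - 1" using j by simp
    have "word_plus u ! j < v ! j" using wo[OF jj] j(4) by simp
    moreover have "\<forall>i<j. word_plus u ! i = v ! i" using wo j(3) jj by simp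
    ultimately show ?thesis unfolding lle_def llt_def using len ne j(2)
      by (intro disjI2 conjI exI[of _ j]) auto
  qed
qed

lemma sbar_conc: "sbar M (conc u s) = conc (word_bar M u) (sbar M s)"
  by (auto simp: sbar_def conc_def fun_eq_iff)

lemma seq_less_sbar: "seq_less s t \<Longrightarrow> (\<forall>i. t i \<le> M) \<Longrightarrow> seq_less (sbar M t) (sbar M s)"
proof -
  assume h: "seq_less s t" "\<forall>i. t i \<le> M"
  then obtain n where n: "\<forall>i<n. s i = t i" "s n < t n" unfolding seq_less_def by blast
  have "t n \<le> M" using h by auto
  then show ?thesis unfolding seq_less_def sbar_def using n by (intro exI[of _ n]) auto
qed

lemma seq_le_sbar: "seq_le s t \<Longrightarrow> (\<forall>i. t i \<le> M) \<Longrightarrow> seq_le (sbar M t) (sbar M s)"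
  unfolding seq_le_def using seq_less_sbar by blast

lemma sbar_sbar: "(\<forall>i. s i \<le> M) \<Longrightarrow> sbar M (sbar M s) = s"
  by (auto simp: sbar_def fun_eq_iff)

lemma per_conc: "a \<noteq> [] \<Longrightarrow> per a = conc a (per a)"
proof -
  assume ne: "a \<noteq> []"
  show ?thesis
  proof (rule ext)
    fix i
    show "per a i = conc a (per a) i"
    proof (cases "i < length a")
      case True then show ?thesis by (simp add: per_def conc_def)
    next
      case False
      then have "i mod length a = (i - length a) mod length a"
        by (simp add: le_mod_geq)
      then show ?thesis using False by (simp add: per_def conc_def)
    qed
  qed
qed

lemma shift_per_mult: "shift (per a) (k * length a) = per a"
  by (auto simp: per_def fun_eq_iff)

lemma shift_per_mod: "shift (per a) k = shift (per a) (k mod length a)"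
  by (auto simp: per_def fun_eq_iff mod_add_right_eq)

lemma shift_per_lt: "a \<noteq> [] \<Longrightarrow> i \<le> length a \<Longrightarrow> shift (per a) i = conc (drop i a) (per a)"
  by (metis per_conc shift_conc_le)

lemma per_bar: "a \<noteq> [] \<Longrightarrow> sbar M (per a) = per (word_bar M a)"
proof (rule ext)
  fix i assume "a \<noteq> []"
  then have "i mod length a < length a" by simp
  then show "sbar M (per a) i = per (word_bar M a) i" by (simp add: sbar_def per_def)
qed

lemma prefix_per_conc: "prefix_per u v = conc u (per v)"
  by (auto simp: prefix_per_def conc_def fun_eq_iff)

lemma per_bounded: "set a \<subseteq> {0..M} \<Longrightarrow> a \<noteq> [] \<Longrightarrow> per a i \<le> M"
proof -
  assume h: "set a \<subseteq> {0..M}" "a \<noteq> []"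
  then have "i mod length a < length a" by simp
  then have "a ! (i mod length a) \<in> set a" by (rule nth_mem)
  then have "a ! (i mod length a) \<in> {0..M}" using h(1) by blast
  then show ?thesis by (simp add: per_def)
qed

lemma conc_bounded: "set u \<subseteq> {0..M} \<Longrightarrow> (\<forall>i. s i \<le> M) \<Longrightarrow> conc u s i \<le> M"
proof -
  assume h: "set u \<subseteq> {0..M}" "\<forall>i. s i \<le> M"
  show ?thesis
  proof (cases "i < length u")
    case True
    then have "u ! i \<in> set u" by (rule nth_mem)
    then have "u ! i \<in> {0..M}" using h(1) by blast
    then show ?thesis using True by (simp add: conc_def)
  qed (use h in \<open>simp add: conc_def\<close>)
qed




lemma llt_first: "length u = length v \<Longrightarrow> u \<noteq> [] \<Longrightarrow> u!0 < v!0 \<Longrightarrow> llt u v"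
  unfolding llt_def by (intro conjI exI[of _ 0]) auto

lemma llt_single: "llt [x] [y] \<longleftrightarrow> x < y"
  unfolding llt_def by auto

lemma lle_single: "lle [x] [y] \<longleftrightarrow> x \<le> y"
  unfolding lle_def llt_def by auto

lemma per_split: "a \<noteq> [] \<Longrightarrow> per a = conc (take k a) (conc (drop k a) (per a))"
  by (metis append_take_drop_id conc_append per_conc)

lemma fund_cases:
  assumes "fundamental M a"
  shows "set a \<subseteq> {0..M}"
    and "length a \<ge> 2 \<Longrightarrow> 1 \<le> i \<Longrightarrow> i < length a \<Longrightarrow>
          lle (word_bar M (take (length a - i) a)) (drop i a) \<and> llt (drop i a) (take (length a - i) a)"
    and "length a = 1 \<Longrightarrow> M \<ge> 2 \<and> M - a!0 \<le> a!0 \<and> a!0 < M"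
    and "a \<noteq> []"
proof -
  show "set a \<subseteq> {0..M}" using assms unfolding fundamental_def by blast
  show "a \<noteq> []" using assms unfolding fundamental_def by auto
  show "length a = 1 \<Longrightarrow> M \<ge> 2 \<and> M - a!0 \<le> a!0 \<and> a!0 < M" using assms unfolding fundamental_def by auto
  assume h: "length a \<ge> 2" "1 \<le> i" "i < length a"
  have c: "word_le (word_bar M (take (length a - i) a)) (drop i a) \<and> word_less (drop i a) (take (length a - i) a)"
    using assms h unfolding fundamental_def by auto
  have l1: "length (word_bar M (take (length a - i) a)) = length (drop i a)" using h by simp
  have l2: "length (drop i a) = length (take (length a - i) a)" using h by simp
  show "lle (word_bar M (take (length a - i) a)) (drop i a) \<and> llt (drop i a) (take (length a - i) a)"
    using c word_le_lle[OF l1] word_less_llt[OF l2] by blast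
qed

lemma fund_F1:
  assumes "fundamental M a" "1 \<le> i" "i < length a"
  shows "llt (drop i a) (take (length a - i) a)"
  using fund_cases(2)[OF assms(1) _ assms(2,3)] assms by linarith

lemma fund_F2:
  assumes "fundamental M a" "1 \<le> i" "i < length a"
  shows "lle (word_bar M (take (length a - i) a)) (drop i a)"
  using fund_cases(2)[OF assms(1) _ assms(2,3)] assms by linarith

lemma fund_F2':
  assumes "fundamental M a" "1 \<le> i" "i < length a"
  shows "lle (word_bar M (drop i a)) (take (length a - i) a)"
proof -
  have s: "set a \<subseteq> {0..M}" by (rule fund_cases(1)[OF assms(1)])
  have sd: "set (drop i a) \<subseteq> {0..M}" using order_trans[OF set_drop_subset s] .
  have st: "set (take (length a - i) a) \<subseteq> {0..M}" using order_trans[OF set_take_subset s] .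
  have "lle (word_bar M (drop i a)) (word_bar M (word_bar M (take (length a - i) a)))"
    by (rule lle_bar[OF fund_F2[OF assms] sd])
  then show ?thesis by (simp only: word_bar_bar[OF st])
qed

lemma fund_F3a:
  assumes "fundamental M a" "1 \<le> i" "i < length a"
  shows "lle (word_plus (drop i a)) (take (length a - i) a)"
  by (rule llt_plus_le[OF fund_F1[OF assms]])

lemma fund_F3b:
  assumes "fundamental M a" "1 \<le> i" "i < length a"
  shows "llt (word_bar M (take i a)) (word_plus (drop (length a - i) a))"
proof -
  have "lle (word_bar M (take (length a - (length a - i)) a)) (drop (length a - i) a)"
    by (rule fund_F2[OF assms(1)]) (use assms in auto)
  moreover have "length a - (length a - i) = i" using assms by simp
  moreover have "llt (drop (length a - i) a) (word_plus (drop (length a - i) a))"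
    by (rule llt_plus) (use assms in auto)
  ultimately show ?thesis using lle_llt_trans by metis
qed

lemma fund_letters:
  assumes "fundamental M a"
  shows "a ! (length a - 1) < M" "M - a!0 \<le> a ! (length a - 1)"
    "length a \<ge> 2 \<Longrightarrow> a ! (length a - 1) < a ! 0" "1 \<le> a ! 0"
proof -
  have ne: "a \<noteq> []" by (rule fund_cases(4)[OF assms])
  have s: "set a \<subseteq> {0..M}" by (rule fund_cases(1)[OF assms])
  have a0: "a!0 \<le> M" using s ne nth_mem by fastforce
  have "(length a \<ge> 2 \<and> a ! (length a - 1) < a ! 0 \<and> M - a!0 \<le> a ! (length a - 1)) \<or> (length a = 1 \<and> M \<ge> 2 \<and> M - a!0 \<le> a!0 \<and> a!0 < M)"
  proof (cases "length a \<ge> 2")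
    case True
    have i1: "1 \<le> length a - 1" "length a - 1 < length a" using True by auto
    have d: "drop (length a - 1) a = [a ! (length a - 1)]"
      using True by (metis Cons_nth_drop_Suc One_nat_def Suc_pred drop_all i1(2) le_refl length_greater_0_conv ne)
    have t: "take (length a - (length a - 1)) a = [a!0]"
      using True ne by (simp add: take_Suc_conv_app_nth)
    have "llt (drop (length a - 1) a) (take (length a - (length a - 1)) a)" by (rule fund_F1[OF assms i1])
    then have x1: "a ! (length a - 1) < a ! 0" using d t llt_single by simp
    have "lle (word_bar M (take (length a - (length a - 1)) a)) (drop (length a - 1) a)" by (rule fund_F2[OF assms i1])
    then have x2: "M - a!0 \<le> a ! (length a - 1)" using d t lle_single by simp
    show ?thesis using True x1 x2 by simp
  next
    case False
    have "length a > 0" using ne by simp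
    then have "length a = 1" using False by linarith
    then show ?thesis using fund_cases(3)[OF assms] by simp
  qed
  then show "a ! (length a - 1) < M" "M - a!0 \<le> a ! (length a - 1)"
    "length a \<ge> 2 \<Longrightarrow> a ! (length a - 1) < a ! 0" "1 \<le> a ! 0"
    using a0 by auto
qed

lemma fund_plus0:
  assumes "fundamental M a"
  shows "M - a!0 < word_plus a ! 0" "M - word_plus a ! 0 < a ! 0" "1 \<le> word_plus a ! 0"
proof -
  have ne: "a \<noteq> []" by (rule fund_cases(4)[OF assms])
  note f = fund_letters[OF assms]
  have "(length a \<ge> 2 \<and> word_plus a ! 0 = a ! 0) \<or> (length a = 1 \<and> word_plus a ! 0 = a ! 0 + 1)"
  proof (cases "length a \<ge> 2")
    case True then show ?thesis using word_plus_nth_other[of 0 a] by simp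
  next
    case False
    have "length a > 0" using ne by simp
    then have "length a = 1" using False by linarith
    then show ?thesis using word_plus_nth_last[OF ne] by simp
  qed
  then show "M - a!0 < word_plus a ! 0" "M - word_plus a ! 0 < a ! 0" "1 \<le> word_plus a ! 0"
    using f by auto
qed

lemma fund_plus_set:
  assumes "fundamental M a"
  shows "set (word_plus a) \<subseteq> {0..M}"
proof -
  have ne: "a \<noteq> []" by (rule fund_cases(4)[OF assms])
  have s: "set a \<subseteq> {0..M}" by (rule fund_cases(1)[OF assms])
  have "set (butlast a) \<subseteq> {0..M}" using order_trans[OF _ s] by (meson in_set_butlastD subsetI)
  moreover have "last a + 1 \<le> M" using fund_letters(1)[OF assms] ne by (simp add: last_conv_nth)
  ultimately show ?thesis by (simp add: word_plus_def)
qed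

lemma bar_set: "set (word_bar M u) \<subseteq> {0..M}"
  by (auto simp: word_bar_def)

lemma fund_shift_less:
  assumes "fundamental M a" "1 \<le> i" "i < length a"
  shows "seq_less (shift (per a) i) (per a)"
proof -
  have ne: "a \<noteq> []" by (rule fund_cases(4)[OF assms(1)])
  have e1: "shift (per a) i = conc (drop i a) (per a)" using shift_per_lt[OF ne] assms by simp
  have e2: "per a = conc (take (length a - i) a) (conc (drop (length a - i) a) (per a))" by (rule per_split[OF ne])
  have "llt (drop i a) (take (length a - i) a)" by (rule fund_F1[OF assms])
  then have "seq_less (conc (drop i a) (per a)) (conc (take (length a - i) a) (conc (drop (length a - i) a) (per a)))"
    using seq_less_conc llt_len by blast
  then show ?thesis using e1 e2 by simp
qed

lemma fund_shift_le:
  assumes "fundamental M a"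
  shows "seq_le (shift (per a) k) (per a)"
proof -
  have ne: "a \<noteq> []" by (rule fund_cases(4)[OF assms(1)])
  define i where "i = k mod length a"
  have e: "shift (per a) k = shift (per a) i" unfolding i_def by (rule shift_per_mod)
  have il: "i < length a" unfolding i_def using ne by simp
  show ?thesis
  proof (cases "i = 0")
    case True then show ?thesis using e by simp
  next
    case False
    then show ?thesis using e fund_shift_less[OF assms, of i] il seq_less_imp_le by simp
  qed
qed

definition good :: "nat \<Rightarrow> (nat \<Rightarrow> nat) \<Rightarrow> bool" where
  "good M s \<longleftrightarrow> (\<forall>i. s i \<le> M) \<and> 1 \<le> s 0 \<and> not_ending_0 s \<and> (\<forall>k. seq_le (shift s k) s)"

lemma good_per:
  assumes "fundamental M a"
  shows "good M (per a)"
proof -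
  have ne: "a \<noteq> []" by (rule fund_cases(4)[OF assms(1)])
  have s: "set a \<subseteq> {0..M}" by (rule fund_cases(1)[OF assms])
  have b: "\<forall>i. per a i \<le> M" using per_bounded[OF s ne] by blast
  have z: "per a 0 = a ! 0" by (simp add: per_def)
  have p0: "\<And>n. per a (n * length a) = a ! 0" by (simp add: per_def)
  have ne0: "not_ending_0 (per a)" unfolding not_ending_0_def
  proof
    fix n
    have "1 \<le> length a" using ne by (simp add: Suc_le_eq)
    then have "n * 1 \<le> n * length a" by (rule mult_le_mono2)
    then have "n \<le> n * length a" by simp
    moreover have "per a (n * length a) \<noteq> 0" using p0 fund_letters(4)[OF assms] by simp
    ultimately show "\<exists>i\<ge>n. per a i \<noteq> 0" by blast
  qed
  show ?thesis unfolding good_def using b z fund_letters(4)[OF assms] ne0 fund_shift_le[OF assms] by simp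
qed

definition qrseq :: "nat \<Rightarrow> nat list \<Rightarrow> nat \<Rightarrow> nat" where
  "qrseq M a = conc (word_plus a) (per (word_bar M a))"

lemma qrseq_eq: "prefix_per (word_plus a) (word_bar M a) = qrseq M a"
  by (simp add: qrseq_def prefix_per_conc)

lemma fund_H:
  assumes "fundamental M a" "1 \<le> k" "k < length a"
  shows "seq_less (per (word_bar M a)) (conc (word_plus (drop (length a - k) a)) (per (word_bar M a)))"
proof -
  have ne: "a \<noteq> []" by (rule fund_cases(4)[OF assms(1)])
  have nb: "word_bar M a \<noteq> []" using ne by (simp add: word_bar_def)
  have e: "per (word_bar M a) = conc (word_bar M (take k a)) (conc (drop k (word_bar M a)) (per (word_bar M a)))"
    using per_split[OF nb, of k] by (simp add: word_bar_take)
  have "llt (word_bar M (take k a)) (word_plus (drop (length a - k) a))" by (rule fund_F3b[OF assms])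
  then show ?thesis using e seq_less_conc llt_len by metis
qed

lemma good_qr:
  assumes "fundamental M a"
  shows "good M (qrseq M a)"
proof -
  let ?m = "length a"
  let ?ab = "word_bar M a"
  have ne: "a \<noteq> []" by (rule fund_cases(4)[OF assms(1)])
  have nb: "?ab \<noteq> []" using ne by (simp add: word_bar_def)
  have s: "set a \<subseteq> {0..M}" by (rule fund_cases(1)[OF assms])
  have sp: "set (word_plus a) \<subseteq> {0..M}" by (rule fund_plus_set[OF assms])
  have bd: "\<forall>i. qrseq M a i \<le> M" unfolding qrseq_def
    using conc_bounded[OF sp] per_bounded[OF bar_set nb] by blast
  have lp: "length (word_plus a) = ?m" using ne by simp
  have z: "qrseq M a 0 = word_plus a ! 0" using ne lp by (simp add: qrseq_def conc_def)
  have lastbar: "?ab ! (?m - 1) \<noteq> 0" using fund_letters(1)[OF assms] ne by simp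
  have ne0: "not_ending_0 (qrseq M a)" unfolding not_ending_0_def
  proof
    fix n
    have "qrseq M a (?m + (n * ?m + (?m - 1))) = per ?ab (n * ?m + (?m - 1))"
      using lp by (simp add: qrseq_def conc_def)
    also have "\<dots> = ?ab ! (?m - 1)" using ne by (simp add: per_def)
    finally have nz: "qrseq M a (?m + (n * ?m + (?m - 1))) \<noteq> 0" using lastbar by simp
    have "1 \<le> ?m" using ne by (simp add: Suc_le_eq)
    then have "n * 1 \<le> n * ?m" by (rule mult_le_mono2)
    then have "n \<le> ?m + (n * ?m + (?m - 1))" by linarith
    then show "\<exists>i\<ge>n. qrseq M a i \<noteq> 0" using nz by blast
  qed
  have sh: "seq_le (shift (qrseq M a) k) (qrseq M a)" for k
  proof (cases "k < ?m")
    case True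
    show ?thesis
    proof (cases "k = 0")
      case True then show ?thesis by simp
    next
      case False
      then have k1: "1 \<le> k" by simp
      have e1: "shift (qrseq M a) k = conc (word_plus (drop k a)) (per ?ab)"
        unfolding qrseq_def using shift_conc_le[of k "word_plus a"] lp True drop_word_plus[OF True] by simp
      have mk: "?m - k < ?m" using k1 True by simp
      have e2: "qrseq M a = conc (take (?m - k) a) (conc (word_plus (drop (?m - k) a)) (per ?ab))"
        unfolding qrseq_def using word_plus_split[OF mk] by (simp add: conc_append)
      have l: "lle (word_plus (drop k a)) (take (?m - k) a)" by (rule fund_F3a[OF assms k1 True])
      have ln: "length (word_plus (drop k a)) = length (take (?m - k) a)" using True by simp
      show ?thesis
      proof (cases "word_plus (drop k a) = take (?m - k) a")
        case True
        have "seq_le (per ?ab) (conc (word_plus (drop (?m - k) a)) (per ?ab))"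
          using fund_H[OF assms k1 \<open>k < ?m\<close>] seq_less_imp_le by blast
        then show ?thesis using e1 e2 True seq_le_conc_same by metis
      next
        case False
        then have "llt (word_plus (drop k a)) (take (?m - k) a)" using l lle_def by blast
        then show ?thesis using e1 e2 seq_le_conc[OF ln] by metis
      qed
    qed
  next
    case False
    define j where "j = (k - ?m) mod ?m"
    have e1: "shift (qrseq M a) k = shift (per ?ab) j"
    proof -
      have "shift (qrseq M a) k = shift (per ?ab) (k - ?m)"
        unfolding qrseq_def using shift_conc_ge[of "word_plus a" k] lp False by simp
      also have "\<dots> = shift (per ?ab) j" unfolding j_def using shift_per_mod[of ?ab] by simp
      finally show ?thesis .
    qed
    have jl: "j < ?m" unfolding j_def using ne by simp
    show ?thesis
    proof (cases "j = 0")
      case True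
      have e2: "shift (qrseq M a) k = conc ?ab (per ?ab)" using e1 True per_conc[OF nb] by simp
      have "llt ?ab (word_plus a)"
        by (rule llt_first) (use ne nb lp fund_plus0(1)[OF assms] in auto)
      then have "seq_less (conc ?ab (per ?ab)) (conc (word_plus a) (per ?ab))"
        using seq_less_conc lp by simp
      then have "seq_less (shift (qrseq M a) k) (qrseq M a)"
        using e2 by (simp add: qrseq_def)
      then show ?thesis by (rule seq_less_imp_le)
    next
      case False
      then have j1: "1 \<le> j" by simp
      have e2: "shift (qrseq M a) k = conc (word_bar M (drop j a)) (per ?ab)"
        using e1 shift_per_lt[OF nb, of j] jl by (simp add: word_bar_drop)
      have mk: "?m - j < ?m" using j1 jl by simp
      have e3: "qrseq M a = conc (take (?m - j) a) (conc (word_plus (drop (?m - j) a)) (per ?ab))"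
        unfolding qrseq_def using word_plus_split[OF mk] by (simp add: conc_append)
      have l: "lle (word_bar M (drop j a)) (take (?m - j) a)" by (rule fund_F2'[OF assms j1 jl])
      have ln: "length (word_bar M (drop j a)) = length (take (?m - j) a)" using jl by simp
      show ?thesis
      proof (cases "word_bar M (drop j a) = take (?m - j) a")
        case True
        have "seq_le (per ?ab) (conc (word_plus (drop (?m - j) a)) (per ?ab))"
          using fund_H[OF assms j1 jl] seq_less_imp_le by blast
        then show ?thesis using e2 e3 True seq_le_conc_same by metis
      next
        case False
        then have "llt (word_bar M (drop j a)) (take (?m - j) a)" using l lle_def by blast
        then show ?thesis using e2 e3 seq_le_conc[OF ln] by metis
      qed
    qed
  qed
  show ?thesis unfolding good_def
    using bd z fund_plus0(3)[OF assms] ne0 sh by simp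
qed




definition val :: "real \<Rightarrow> (nat \<Rightarrow> nat) \<Rightarrow> real" where
  "val q s = (\<Sum>i. real (s i) / q ^ Suc i)"

definition bnd :: "nat \<Rightarrow> (nat \<Rightarrow> nat) \<Rightarrow> bool" where
  "bnd M s \<longleftrightarrow> (\<forall>i. s i \<le> M)"

lemma bnd_shift: "bnd M s \<Longrightarrow> bnd M (shift s k)"
  by (simp add: bnd_def)

lemma summable_geo_M:
  assumes q: "1 < q"
  shows "summable (\<lambda>i. real M / q ^ Suc i)"
proof -
  have "norm (1 / q) < 1" using q by simp
  then have "summable (\<lambda>i. (1 / q) ^ i)" by (rule summable_geometric)
  then have S: "summable (\<lambda>i. (real M / q) * (1 / q) ^ i)" by (rule summable_mult)
  have E: "(\<lambda>i. (real M / q) * (1 / q) ^ i) = (\<lambda>i. real M / q ^ Suc i)"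
    by (rule ext) (simp add: power_divide field_simps)
  show ?thesis using S unfolding E .
qed

lemma summable_val:
  assumes q: "1 < q" and b: "bnd M s"
  shows "summable (\<lambda>i. real (s i) / q ^ Suc i)"
proof (rule summable_comparison_test'[OF summable_geo_M[OF q, of M]])
  fix n :: nat
  have "s n \<le> M" using b by (simp add: bnd_def)
  then have "real (s n) \<le> real M" by simp
  moreover have "0 < q ^ Suc n" using q by simp
  ultimately show "norm (real (s n) / q ^ Suc n) \<le> real M / q ^ Suc n"
    by (simp add: divide_right_mono)
qed

lemma val_nonneg: "1 < q \<Longrightarrow> bnd M s \<Longrightarrow> 0 \<le> val q s"
  unfolding val_def by (rule suminf_nonneg[OF summable_val]) auto

lemma val_pos:
  assumes q: "1 < q" and b: "bnd M s" and nz: "s i \<noteq> 0"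
  shows "0 < val q s"
  unfolding val_def
proof (rule suminf_pos2[OF summable_val[OF q b]])
  show "\<And>n. 0 \<le> real (s n) / q ^ Suc n" using q by simp
  show "0 < real (s i) / q ^ Suc i" using q nz by simp
qed

lemma val_le_bound:
  assumes q: "1 < q" and b: "bnd M s"
  shows "val q s \<le> (\<Sum>i. real M / q ^ Suc i)"
  unfolding val_def
proof (rule suminf_le[OF _ summable_val[OF q b] summable_geo_M[OF q]])
  fix n
  have "s n \<le> M" using b by (simp add: bnd_def)
  then show "real (s n) / q ^ Suc n \<le> real M / q ^ Suc n" using q by (simp add: divide_right_mono)
qed

lemma val_split:
  assumes q: "1 < q" and b: "bnd M s"
  shows "val q s = (\<Sum>i<n. real (s i) / q ^ Suc i) + val q (shift s n) / q ^ n"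
proof -
  have sm: "summable (\<lambda>i. real (s i) / q ^ Suc i)" by (rule summable_val[OF q b])
  have "val q s = (\<Sum>i. real (s (i + n)) / q ^ Suc (i + n)) + (\<Sum>i<n. real (s i) / q ^ Suc i)"
    unfolding val_def by (rule suminf_split_initial_segment[OF sm])
  moreover have "(\<lambda>i. real (s (i + n)) / q ^ Suc (i + n)) = (\<lambda>i. (real (shift s n i) / q ^ Suc i) / q ^ n)"
    by (rule ext) (simp add: power_add field_simps)
  moreover have "(\<Sum>i. (real (shift s n i) / q ^ Suc i) / q ^ n) = val q (shift s n) / q ^ n"
    unfolding val_def by (rule suminf_divide[OF summable_val[OF q bnd_shift[OF b]]])
  ultimately show ?thesis by simp
qed

lemma val_split_Suc:
  assumes q: "1 < q" and b: "bnd M s"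
  shows "val q s = (\<Sum>i<j. real (s i) / q ^ Suc i) + real (s j) / q ^ Suc j + val q (shift s (Suc j)) / q ^ Suc j"
  using val_split[OF q b, of "Suc j"] by simp


lemma sum_prefix_eq:
  assumes "\<forall>i<j. s i = t i"
  shows "(\<Sum>i<j. real (s i) / q ^ Suc i) = (\<Sum>i<j. real (t i) / q ^ Suc i)"
  by (rule sum.cong) (use assms in auto)

lemma tails_le1:
  assumes q: "1 < q" and b: "bnd M s" and v: "val q s = 1"
    and lex: "\<And>k. seq_le (shift s k) s"
  shows "val q (shift s k) \<le> 1"
proof -
  define V where "V = Sup (range (\<lambda>k. val q (shift s k)))"
  have bdd: "bdd_above (range (\<lambda>k. val q (shift s k)))"
    by (rule bdd_aboveI[where M="\<Sum>i. real M / q ^ Suc i"]) (use val_le_bound[OF q bnd_shift[OF b]] in auto)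
  have ub: "val q (shift s k) \<le> V" for k unfolding V_def by (rule cSup_upper[OF _ bdd]) simp
  have V1: "1 \<le> V" using ub[of 0] v by simp
  have key: "val q (shift s k) \<le> 1 + (V - 1) / q" if V1': "1 < V" for k
  proof (cases "shift s k = s")
    case True
    then show ?thesis using v V1' q by simp
  next
    case False
    then have "seq_less (shift s k) s" using lex[of k] by (simp add: seq_le_def)
    then obtain j where j: "\<forall>i<j. shift s k i = s i" "shift s k j < s j" unfolding seq_less_def by blast
    define A where "A = (\<Sum>i<j. real (s i) / q ^ Suc i)"
    define Q where "Q = q ^ Suc j"
    have Qpos: "0 < Q" unfolding Q_def using q by simp
    have Qq: "q \<le> Q" unfolding Q_def using q by (simp add: power_increasing[of 1 "Suc j" q, simplified])
    have e1: "val q (shift s k) = A + real (s (j + k)) / Q + val q (shift s (k + Suc j)) / Q"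
      using val_split_Suc[OF q bnd_shift[OF b], of k j] sum_prefix_eq[OF j(1), of q]
      unfolding A_def Q_def by simp
    have e2: "val q s = A + real (s j) / Q + val q (shift s (Suc j)) / Q"
      using val_split_Suc[OF q b, of j] unfolding A_def Q_def by simp
    have t0: "0 \<le> val q (shift s (Suc j)) / Q" using val_nonneg[OF q bnd_shift[OF b]] Qpos by simp
    have d1: "real (s (j + k)) \<le> real (s j) - 1" using j(2) by simp
    have d2: "real (s (j + k)) / Q \<le> (real (s j) - 1) / Q" using d1 Qpos by (simp add: divide_right_mono)
    have d3: "val q (shift s (k + Suc j)) / Q \<le> V / Q" using ub[of "k + Suc j"] Qpos by (simp add: divide_right_mono)
    have d4: "(V - 1) / Q \<le> (V - 1) / q" using V1' Qq q by (simp add: divide_left_mono)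
    have d5: "(real (s j) - 1) / Q + V / Q = real (s j) / Q + (V - 1) / Q" unfolding diff_divide_distrib by simp
    show ?thesis using e1 e2 v t0 d2 d3 d4 d5 by linarith
  qed
  have "V \<le> 1"
  proof (rule ccontr)
    assume "\<not> V \<le> 1"
    then have V1': "1 < V" by simp
    have "V \<le> 1 + (V - 1) / q" unfolding V_def
      by (rule cSup_least) (use key[OF V1'] in \<open>auto simp: V_def\<close>)
    moreover have "(V - 1) / q < V - 1" using V1' q by (simp add: divide_less_eq)
    ultimately show False by simp
  qed
  then show ?thesis using ub[of k] by simp
qed

lemma val_gt1:
  assumes q: "1 < q" and bs: "bnd M s" and bt: "bnd M t" and v: "val q s = 1"
    and tails: "\<And>k. val q (shift s k) \<le> 1" and ne: "not_ending_0 t" and lt: "seq_less s t"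
  shows "1 < val q t"
proof -
  obtain j where j: "\<forall>i<j. s i = t i" "s j < t j" using lt unfolding seq_less_def by blast
  define A where "A = (\<Sum>i<j. real (s i) / q ^ Suc i)"
  define Q where "Q = q ^ Suc j"
  have Qpos: "0 < Q" unfolding Q_def using q by simp
  have e1: "val q t = A + real (t j) / Q + val q (shift t (Suc j)) / Q"
    using val_split_Suc[OF q bt, of j] sum_prefix_eq[OF j(1), of q] unfolding A_def Q_def by simp
  have e2: "val q s = A + real (s j) / Q + val q (shift s (Suc j)) / Q"
    using val_split_Suc[OF q bs, of j] unfolding A_def Q_def by simp
  obtain i where i: "i \<ge> Suc j" "t i \<noteq> 0" using ne unfolding not_ending_0_def by blast
  have "shift t (Suc j) (i - Suc j) \<noteq> 0" using i by simp
  then have tp: "0 < val q (shift t (Suc j))" by (rule val_pos[OF q bnd_shift[OF bt]])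
  have tp': "0 < val q (shift t (Suc j)) / Q" using tp Qpos by simp
  have sl: "val q (shift s (Suc j)) / Q \<le> 1 / Q" using tails[of "Suc j"] Qpos by (simp add: divide_right_mono)
  have d1: "real (s j) + 1 \<le> real (t j)" using j(2) by simp
  have d2: "(real (s j) + 1) / Q \<le> real (t j) / Q" using d1 Qpos by (simp add: divide_right_mono)
  have d3: "(real (s j) + 1) / Q = real (s j) / Q + 1 / Q" by (simp add: add_divide_distrib)
  show ?thesis using e1 e2 v tp' sl d2 d3 by linarith
qed

lemma val_antitone:
  assumes q1: "1 < q1" and q12: "q1 \<le> q2" and b: "bnd M s"
  shows "val q2 s \<le> val q1 s"
  unfolding val_def
proof (rule suminf_le)
  have q2: "1 < q2" using q1 q12 by simp
  show "summable (\<lambda>i. real (s i) / q2 ^ Suc i)" by (rule summable_val[OF q2 b])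
  show "summable (\<lambda>i. real (s i) / q1 ^ Suc i)" by (rule summable_val[OF q1 b])
  fix n
  have "q1 ^ Suc n \<le> q2 ^ Suc n" by (rule power_mono[OF q12]) (use q1 in simp)
  moreover have "0 < q1 ^ Suc n" using q1 by simp
  ultimately show "real (s n) / q2 ^ Suc n \<le> real (s n) / q1 ^ Suc n"
    by (simp add: divide_left_mono)
qed

lemma val_strict:
  assumes q1: "1 < q1" and q12: "q1 < q2" and b: "bnd M s" and s0: "1 \<le> s 0"
  shows "val q2 s < val q1 s"
proof -
  have q2: "1 < q2" using q1 q12 by simp
  have e1: "val q1 s = real (s 0) / q1 + val q1 (shift s 1) / q1"
    using val_split_Suc[OF q1 b, of 0] by simp
  have e2: "val q2 s = real (s 0) / q2 + val q2 (shift s 1) / q2"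
    using val_split_Suc[OF q2 b, of 0] by simp
  have a: "real (s 0) / q2 < real (s 0) / q1" using s0 q1 q12 by (simp add: divide_strict_left_mono)
  have v12: "val q2 (shift s 1) \<le> val q1 (shift s 1)" by (rule val_antitone[OF q1 less_imp_le[OF q12] bnd_shift[OF b]])
  have n1: "0 \<le> val q1 (shift s 1)" by (rule val_nonneg[OF q1 bnd_shift[OF b]])
  have b1: "val q2 (shift s 1) / q2 \<le> val q1 (shift s 1) / q2" using v12 q2 by (simp add: divide_right_mono)
  have b2: "val q1 (shift s 1) / q2 \<le> val q1 (shift s 1) / q1" using n1 q1 q12 by (simp add: divide_left_mono)
  show ?thesis using e1 e2 a b1 b2 by linarith
qed


definition gd :: "nat \<Rightarrow> real \<Rightarrow> real \<Rightarrow> nat" where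
  "gd M q r = min M (nat (\<lceil>q * r\<rceil> - 1))"

fun grr :: "nat \<Rightarrow> real \<Rightarrow> nat \<Rightarrow> real" where
  "grr M q 0 = 1"
| "grr M q (Suc n) = q * grr M q n - real (gd M q (grr M q n))"

lemma gd_props:
  assumes "0 < q * r"
  shows "gd M q r \<le> M" "real (gd M q r) < q * r" "gd M q r < M \<Longrightarrow> q * r \<le> real (gd M q r) + 1"
proof -
  define c where "c = \<lceil>q * r\<rceil>"
  have cc: "of_int c - 1 < q * r" "q * r \<le> of_int c" unfolding c_def using ceiling_correct by auto
  have c1: "1 \<le> c" using cc assms by linarith
  have rn: "real (nat (c - 1)) = of_int c - 1" using c1 by simp
  show "gd M q r \<le> M" by (simp add: gd_def)
  show "real (gd M q r) < q * r"
  proof (cases "M \<le> nat (c - 1)")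
    case True
    then have "gd M q r = M" by (simp add: gd_def c_def)
    moreover have "real M \<le> real (nat (c - 1))" using True by simp
    ultimately show ?thesis using rn cc by linarith
  next
    case False
    then have "gd M q r = nat (c - 1)" by (simp add: gd_def c_def)
    then show ?thesis using rn cc by simp
  qed
  show "gd M q r < M \<Longrightarrow> q * r \<le> real (gd M q r) + 1"
  proof -
    assume "gd M q r < M"
    then have "gd M q r = nat (c - 1)" by (simp add: gd_def c_def)
    then show ?thesis using rn cc by simp
  qed
qed

lemma grr_bounds:
  assumes q: "1 < q" "q \<le> real M + 1"
  shows "0 < grr M q n \<and> grr M q n \<le> real M / (q - 1)"
proof (induct n)
  case 0
  have "q - 1 \<le> real M" using q by simp
  then have "1 \<le> real M / (q - 1)" using q by (simp add: le_divide_eq)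
  then show ?case by simp
next
  case (Suc n)
  define r where "r = grr M q n"
  define d where "d = gd M q r"
  have r: "0 < r" "r \<le> real M / (q - 1)" using Suc unfolding r_def by auto
  have qr: "0 < q * r" using r q by simp
  note g = gd_props[OF qr, of M]
  have e: "grr M q (Suc n) = q * r - real d" unfolding r_def d_def by simp
  have R1: "1 \<le> real M / (q - 1)"
  proof -
    have "q - 1 \<le> real M" using q by simp
    then show ?thesis using q by (simp add: le_divide_eq)
  qed
  have pos: "0 < q * r - real d" using g(2) unfolding d_def by simp
  have le: "q * r - real d \<le> real M / (q - 1)"
  proof (cases "d < M")
    case True
    then have "q * r \<le> real d + 1" using g(3) unfolding d_def by simp
    then show ?thesis using R1 by simp
  next
    case False
    then have dM: "d = M" using g(1) unfolding d_def by simp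
    have "q * r \<le> q * (real M / (q - 1))" by (rule mult_left_mono) (use r q in auto)
    moreover have "q * (real M / (q - 1)) - real M = real M / (q - 1)"
      using q by (simp add: field_simps)
    ultimately show ?thesis using dM by simp
  qed
  show ?case using e pos le by simp
qed

lemma grr_partial:
  assumes q: "1 < q"
  shows "(\<Sum>i<n. real (gd M q (grr M q i)) / q ^ Suc i) = 1 - grr M q n / q ^ n"
proof (induct n)
  case 0 then show ?case by simp
next
  case (Suc n)
  have qn: "q ^ n \<noteq> 0" using q by simp
  have "(\<Sum>i<Suc n. real (gd M q (grr M q i)) / q ^ Suc i)
        = 1 - grr M q n / q ^ n + real (gd M q (grr M q n)) / q ^ Suc n" using Suc by simp
  also have "\<dots> = 1 - (q * grr M q n - real (gd M q (grr M q n))) / q ^ Suc n"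
    using q qn by (simp add: field_simps)
  also have "\<dots> = 1 - grr M q (Suc n) / q ^ Suc n" by simp
  finally show ?case .
qed

lemma greedy_qg:
  assumes q: "1 < q" "q \<le> real M + 1"
  shows "is_quasi_greedy M q (\<lambda>n. gd M q (grr M q n))"
proof -
  define d where "d = (\<lambda>n. gd M q (grr M q n))"
  define R where "R = real M / (q - 1)"
  have bd: "\<And>n. 0 < grr M q n" "\<And>n. grr M q n \<le> R" using grr_bounds[OF q] unfolding R_def by auto
  have dM: "\<And>n. d n \<le> M" unfolding d_def using gd_props(1) bd(1) q by (metis mult_pos_pos zero_less_one less_trans)
  have bdd: "bnd M d" unfolding bnd_def using dM by simp
  have lim0: "(\<lambda>n. grr M q n / q ^ n) \<longlonglongrightarrow> 0"
  proof (rule real_tendsto_sandwich[where f="\<lambda>n. 0" and h="\<lambda>n. R * (1 / q) ^ n"])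
    show "\<forall>\<^sub>F n in sequentially. 0 \<le> grr M q n / q ^ n"
      using bd(1) q by (intro always_eventually allI) (simp add: less_imp_le)
    show "\<forall>\<^sub>F n in sequentially. grr M q n / q ^ n \<le> R * (1 / q) ^ n"
    proof (intro always_eventually allI)
      fix n
      have "grr M q n / q ^ n = grr M q n * (1 / q) ^ n" by (simp add: power_one_over)
      also have "\<dots> \<le> R * (1 / q) ^ n" using bd(2)[of n] q by (simp add: mult_right_mono)
      finally show "grr M q n / q ^ n \<le> R * (1 / q) ^ n" .
    qed
    show "(\<lambda>n. 0) \<longlonglongrightarrow> (0::real)" by simp
    have "(\<lambda>n. (1 / q) ^ n) \<longlonglongrightarrow> 0" by (rule LIMSEQ_realpow_zero) (use q in auto)
    then show "(\<lambda>n. R * (1 / q) ^ n) \<longlonglongrightarrow> 0" using tendsto_mult_right_zero by blast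
  qed
  have sums: "(\<lambda>i. real (d i) / q ^ Suc i) sums 1"
  proof -
    have "(\<lambda>n. 1 - grr M q n / q ^ n) \<longlonglongrightarrow> 1 - 0" by (intro tendsto_intros lim0)
    then have "(\<lambda>n. \<Sum>i<n. real (d i) / q ^ Suc i) \<longlonglongrightarrow> 1"
      unfolding d_def using grr_partial[OF q(1)] by simp
    then show ?thesis by (simp add: sums_def)
  qed
  have vd: "val q d = 1" using sums unfolding val_def by (simp add: sums_iff)
  have ne: "not_ending_0 d" unfolding not_ending_0_def
  proof (rule ccontr)
    assume "\<not> (\<forall>n. \<exists>i\<ge>n. d i \<noteq> 0)"
    then obtain N where N: "\<And>i. i \<ge> N \<Longrightarrow> d i = 0" by auto
    have grow: "grr M q (N + j) = q ^ j * grr M q N" for j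
    proof (induct j)
      case 0 then show ?case by simp
    next
      case (Suc j)
      have "d (N + j) = 0" using N by simp
      then have "gd M q (grr M q (N + j)) = 0" unfolding d_def by simp
      then show ?case using Suc by simp
    qed
    obtain j where j: "R / grr M q N < q ^ j" using real_arch_pow[OF q(1)] by blast
    then have "R < q ^ j * grr M q N" using bd(1)[of N] by (simp add: divide_less_eq)
    then show False using grow[of j] bd(2)[of "N + j"] by simp
  qed
  have mx: "seq_le t d" if t: "in_Omega M t" "not_ending_0 t" "expands_one q t" for t
  proof (rule ccontr)
    assume "\<not> seq_le t d"
    then have "seq_less d t" by (simp add: seq_not_le)
    then obtain j where j: "\<forall>i<j. d i = t i" "d j < t j" unfolding seq_less_def by blast
    have bt: "bnd M t" using t(1) by (simp add: in_Omega_def bnd_def)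
    have vt: "val q t = 1" using t(3) unfolding expands_one_def val_def by (simp add: sums_iff)
    define Q where "Q = q ^ Suc j"
    have Qpos: "0 < Q" unfolding Q_def using q by simp
    have A: "(\<Sum>i<j. real (t i) / q ^ Suc i) = 1 - grr M q j / q ^ j"
      using sum_prefix_eq[OF j(1), of q, symmetric] grr_partial[OF q(1), where n=j and M=M] unfolding d_def by simp
    have e1: "val q t = (1 - grr M q j / q ^ j) + real (t j) / Q + val q (shift t (Suc j)) / Q"
      using val_split_Suc[OF q(1) bt, of j] A unfolding Q_def by simp
    obtain i where i: "i \<ge> Suc j" "t i \<noteq> 0" using t(2) unfolding not_ending_0_def by blast
    have "shift t (Suc j) (i - Suc j) \<noteq> 0" using i by simp
    then have tp: "0 < val q (shift t (Suc j))" by (rule val_pos[OF q(1) bnd_shift[OF bt]])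
    have tp': "0 < val q (shift t (Suc j)) / Q" using tp Qpos by simp
    have tM: "t j \<le> M" using bt by (simp add: bnd_def)
    have dl: "d j < M" using j(2) tM by simp
    have qr: "0 < q * grr M q j" using bd(1)[of j] q by simp
    have h1: "q * grr M q j \<le> real (d j) + 1" using gd_props(3)[OF qr, of M] dl unfolding d_def by simp
    have h2: "real (d j) + 1 \<le> real (t j)" using j(2) by simp
    have h3: "q * grr M q j / Q \<le> real (t j) / Q" using h1 h2 Qpos by (simp add: divide_right_mono)
    have h4: "q * grr M q j / Q = grr M q j / q ^ j" unfolding Q_def using q by (simp add: field_simps)
    show False using e1 vt tp' h3 h4 by linarith
  qed
  show ?thesis unfolding is_quasi_greedy_def d_def[symmetric]
  proof (intro conjI allI impI)
    show "in_Omega M d" using dM by (simp add: in_Omega_def)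
    show "not_ending_0 d" by (fact ne)
    show "expands_one q d" unfolding expands_one_def by (fact sums)
    fix t assume "in_Omega M t \<and> not_ending_0 t \<and> expands_one q t"
    then show "seq_le t d" using mx by blast
  qed
qed


lemma summable_powser_bnd:
  assumes b: "bnd M s" and x: "0 \<le> x" "x < 1"
  shows "summable (\<lambda>n. real (s n) * x ^ n)"
proof (rule summable_comparison_test'[where g="\<lambda>n. real M * x ^ n" and N=0])
  show "summable (\<lambda>n. real M * x ^ n)" using x by (intro summable_mult summable_geometric) simp
  fix n :: nat
  have "s n \<le> M" using b by (simp add: bnd_def)
  then show "norm (real (s n) * x ^ n) \<le> real M * x ^ n" using x by (simp add: mult_right_mono)
qed

lemma val_inv:
  assumes b: "bnd M s" and x: "0 < x" "x < 1"
  shows "val (1 / x) s = x * (\<Sum>n. real (s n) * x ^ n)"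
proof -
  have "val (1 / x) s = (\<Sum>n. x * (real (s n) * x ^ n))"
    unfolding val_def by (rule arg_cong[where f=suminf]) (rule ext, simp add: power_one_over field_simps)
  also have "\<dots> = x * (\<Sum>n. real (s n) * x ^ n)"
    by (rule suminf_mult[OF summable_powser_bnd[OF b less_imp_le[OF x(1)] x(2)]])
  finally show ?thesis .
qed

lemma geo_M:
  assumes M: "1 \<le> M"
  shows "(\<Sum>i. real M / (real M + 1) ^ Suc i) = 1"
proof -
  have n: "norm (1 / (real M + 1)) < 1" using M by simp
  have "(\<lambda>i. (1 / (real M + 1)) ^ i) sums (1 / (1 - 1 / (real M + 1)))" by (rule geometric_sums[OF n])
  then have "(\<lambda>i. (real M / (real M + 1)) * (1 / (real M + 1)) ^ i) sums ((real M / (real M + 1)) * (1 / (1 - 1 / (real M + 1))))"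
    by (rule sums_mult)
  moreover have "(real M / (real M + 1)) * (1 / (1 - 1 / (real M + 1))) = 1"
  proof -
    have m0: "0 < real M" using M by simp
    have "1 - 1 / (real M + 1) = real M / (real M + 1)" by (simp add: field_simps)
    then have "1 / (1 - 1 / (real M + 1)) = (real M + 1) / real M" by simp
    then show ?thesis using m0 by simp
  qed
  moreover have "(\<lambda>i. (real M / (real M + 1)) * (1 / (real M + 1)) ^ i) = (\<lambda>i. real M / (real M + 1) ^ Suc i)"
    by (rule ext) (simp add: power_one_over field_simps)
  ultimately have "(\<lambda>i. real M / (real M + 1) ^ Suc i) sums 1" by simp
  then show ?thesis by (simp add: sums_iff)
qed

lemma exists_q:
  assumes M: "1 \<le> M" and g: "good M s"
  shows "\<exists>q. 1 < q \<and> q \<le> real M + 1 \<and> val q s = 1"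
proof -
  have b: "bnd M s" using g by (simp add: good_def bnd_def)
  have s0: "1 \<le> s 0" using g by (simp add: good_def)
  obtain j where j: "j \<ge> 1" "s j \<noteq> 0" using g unfolding good_def not_ending_0_def by blast
  define F where "F = (\<lambda>x::real. x * (\<Sum>n. real (s n) * x ^ n))"
  define a where "a = 1 / (real M + 1)"
  define bb where "bb = 1 - 1 / (real j + 3)"
  have a0: "0 < a" unfolding a_def by simp
  have bb1: "bb < 1" unfolding bb_def by simp
  have bbh: "1 / 2 \<le> bb" unfolding bb_def by (simp add: field_simps)
  have ah: "a \<le> 1 / 2" unfolding a_def using M by (simp add: field_simps)
  have ab: "a \<le> bb" using ah bbh by simp
  have bb0: "0 < bb" using bbh by simp
  have Fa: "F a \<le> 1"
  proof -
    have "F a = val (1 / a) s" unfolding F_def using val_inv[OF b a0] ab bb1 by simp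
    also have "1 / a = real M + 1" unfolding a_def by simp
    finally have "F a = val (real M + 1) s" .
    also have "\<dots> \<le> (\<Sum>i. real M / (real M + 1) ^ Suc i)" by (rule val_le_bound) (use M b in auto)
    also have "\<dots> = 1" by (rule geo_M[OF M])
    finally show ?thesis .
  qed
  have Fb: "1 \<le> F bb"
  proof -
    define q where "q = 1 / bb"
    have q1: "1 < q" unfolding q_def using bb0 bb1 by simp
    have "F bb = val q s" unfolding F_def q_def using val_inv[OF b bb0 bb1] by simp
    moreover have "(\<Sum>i\<in>{0, j}. real (s i) / q ^ Suc i) \<le> val q s"
      unfolding val_def by (rule sum_le_suminf[OF summable_val[OF q1 b]]) (use q1 in auto)
    moreover have "(\<Sum>i\<in>{0, j}. real (s i) / q ^ Suc i) = real (s 0) / q + real (s j) / q ^ Suc j"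
      using j(1) by simp
    moreover have "1 / q \<le> real (s 0) / q" using s0 q1 by (simp add: divide_right_mono)
    moreover have "1 / q ^ Suc j \<le> real (s j) / q ^ Suc j" using j(2) q1 by (simp add: divide_right_mono)
    moreover have "1 / q = bb" unfolding q_def by simp
    moreover have "1 / q ^ Suc j = bb ^ Suc j" unfolding q_def by (simp add: power_one_over)
    moreover have "1 \<le> bb + bb ^ Suc j"
    proof -
      have x: "- 1 \<le> - 1 / (real j + 3)" by (simp add: field_simps)
      have B0: "1 + real (Suc j) * (- 1 / (real j + 3)) \<le> (1 + (- 1 / (real j + 3))) ^ Suc j"
        by (rule Bernoulli_inequality[OF x])
      have eA: "1 + (- 1 / (real j + 3)) = bb" unfolding bb_def by simp
      have eB: "1 + real (Suc j) * (- 1 / (real j + 3)) = 2 / (real j + 3)" by (simp add: field_simps)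
      have B1: "2 / (real j + 3) \<le> bb ^ Suc j" using B0 unfolding eA eB .
      have "1 - bb = 1 / (real j + 3)" unfolding bb_def by simp
      moreover have "1 / (real j + 3) \<le> 2 / (real j + 3)" by (simp add: divide_right_mono)
      ultimately show ?thesis using B1 by linarith
    qed
    ultimately show ?thesis by linarith
  qed
  define K where "K = (1 + bb) / 2"
  have K1: "K < 1" "bb < K" unfolding K_def using bb1 by auto
  have sK: "summable (\<lambda>n. real (s n) * K ^ n)" by (rule summable_powser_bnd[OF b]) (use K1 bb0 in auto)
  have cont: "continuous_on {a..bb} F"
  proof (rule continuous_at_imp_continuous_on, intro ballI)
    fix x assume x: "x \<in> {a..bb}"
    have nx: "norm x < norm K" using x a0 K1 by auto
    have "isCont (\<lambda>x. \<Sum>n. real (s n) * x ^ n) x" by (rule isCont_powser[OF sK nx])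
    then show "isCont F x" unfolding F_def by (intro isCont_mult continuous_ident)
  qed
  obtain x where x: "a \<le> x" "x \<le> bb" "F x = 1" using IVT'[of F a 1 bb, OF Fa Fb ab cont] by blast
  have x0: "0 < x" using x a0 by simp
  have x1: "x < 1" using x bb1 by simp
  define q where "q = 1 / x"
  have "val q s = F x" unfolding q_def F_def using val_inv[OF b x0 x1] by simp
  moreover have "1 < q" unfolding q_def using x0 x1 by simp
  moreover have "q \<le> real M + 1"
  proof -
    have "1 / x \<le> 1 / a" using x a0 by (simp add: divide_left_mono)
    then show ?thesis unfolding q_def a_def by simp
  qed
  ultimately have "1 < q \<and> q \<le> real M + 1 \<and> val q s = 1" using x(3) by simp
  then show ?thesis by blast
qed

lemma qg_unique: "is_quasi_greedy M q s \<Longrightarrow> is_quasi_greedy M q t \<Longrightarrow> s = t"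
  unfolding is_quasi_greedy_def using seq_le_antisym by blast

lemma alpha_eq: "is_quasi_greedy M q s \<Longrightarrow> alpha M q = s"
  unfolding alpha_def using qg_unique by blast

lemma good_qg:
  assumes g: "good M s" and q: "1 < q" and v: "val q s = 1"
  shows "is_quasi_greedy M q s"
proof -
  have b: "bnd M s" using g by (simp add: good_def bnd_def)
  have lex: "\<And>k. seq_le (shift s k) s" using g by (simp add: good_def)
  have tails: "\<And>k. val q (shift s k) \<le> 1" by (rule tails_le1[OF q b v lex])
  show ?thesis unfolding is_quasi_greedy_def
  proof (intro conjI allI impI)
    show "in_Omega M s" using g by (simp add: good_def in_Omega_def)
    show "not_ending_0 s" using g by (simp add: good_def)
    show "expands_one q s" unfolding expands_one_def
      using summable_val[OF q b] v unfolding val_def by (simp add: sums_iff)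
    fix t assume t: "in_Omega M t \<and> not_ending_0 t \<and> expands_one q t"
    show "seq_le t s"
    proof (rule ccontr)
      assume "\<not> seq_le t s"
      then have lt: "seq_less s t" by (simp add: seq_not_le)
      have bt: "bnd M t" using t by (simp add: in_Omega_def bnd_def)
      have vt: "val q t = 1" using t unfolding expands_one_def val_def by (simp add: sums_iff)
      have "1 < val q t" by (rule val_gt1[OF q b bt v tails _ lt]) (use t in simp)
      then show False using vt by simp
    qed
  qed
qed

definition Qof :: "nat \<Rightarrow> (nat \<Rightarrow> nat) \<Rightarrow> real" where
  "Qof M s = (THE q. 1 < q \<and> q \<le> real M + 1 \<and> alpha M q = s)"

lemma Qof_props:
  assumes M: "1 \<le> M" and g: "good M s"
  shows "1 < Qof M s \<and> Qof M s \<le> real M + 1 \<and> val (Qof M s) s = 1"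
proof -
  obtain q0 where q0: "1 < q0" "q0 \<le> real M + 1" "val q0 s = 1" using exists_q[OF M g] by blast
  have b: "bnd M s" using g by (simp add: good_def bnd_def)
  have s0: "1 \<le> s 0" using g by (simp add: good_def)
  have a0: "alpha M q0 = s" by (rule alpha_eq[OF good_qg[OF g q0(1) q0(3)]])
  have "Qof M s = q0" unfolding Qof_def
  proof (rule the_equality)
    show "1 < q0 \<and> q0 \<le> real M + 1 \<and> alpha M q0 = s" using q0 a0 by simp
    fix q assume q: "1 < q \<and> q \<le> real M + 1 \<and> alpha M q = s"
    have gq: "is_quasi_greedy M q (\<lambda>n. gd M q (grr M q n))" by (rule greedy_qg) (use q in auto)
    then have "alpha M q = (\<lambda>n. gd M q (grr M q n))" by (rule alpha_eq)
    then have "is_quasi_greedy M q s" using gq q by simp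
    then have vq: "val q s = 1" unfolding is_quasi_greedy_def expands_one_def val_def by (simp add: sums_iff)
    show "q = q0"
    proof (rule ccontr)
      assume "q \<noteq> q0"
      then have "q < q0 \<or> q0 < q" by linarith
      then show False
      proof
        assume "q < q0"
        then have "val q0 s < val q s" using val_strict[of q q0 M s] q b s0 by simp
        then show False using vq q0 by simp
      next
        assume "q0 < q"
        then have "val q s < val q0 s" by (rule val_strict[OF q0(1) _ b s0])
        then show False using vq q0 by simp
      qed
    qed
  qed
  then show ?thesis using q0 by simp
qed

lemma Qof_mono:
  assumes M: "1 \<le> M" and g1: "good M s1" and g2: "good M s2" and le: "Qof M s1 \<le> Qof M s2"
  shows "seq_le s1 s2"
proof (rule ccontr)
  assume "\<not> seq_le s1 s2"
  then have lt: "seq_less s2 s1" by (simp add: seq_not_le)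
  note P1 = Qof_props[OF M g1] and P2 = Qof_props[OF M g2]
  have b1: "bnd M s1" using g1 by (simp add: good_def bnd_def)
  have b2: "bnd M s2" using g2 by (simp add: good_def bnd_def)
  have lex2: "\<And>k. seq_le (shift s2 k) s2" using g2 by (simp add: good_def)
  have q2: "1 < Qof M s2" using P2 by simp
  have v2: "val (Qof M s2) s2 = 1" using P2 by simp
  have tails: "\<And>k. val (Qof M s2) (shift s2 k) \<le> 1" by (rule tails_le1[OF q2 b2 v2 lex2])
  have ne1: "not_ending_0 s1" using g1 by (simp add: good_def)
  have "1 < val (Qof M s2) s1" by (rule val_gt1[OF q2 b2 b1 v2 tails ne1 lt])
  moreover have "val (Qof M s2) s1 \<le> val (Qof M s1) s1" by (rule val_antitone[OF _ le b1]) (use P1 in simp)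
  moreover have "val (Qof M s1) s1 = 1" using P1 by simp
  ultimately show False by simp
qed




definition blk :: "nat \<Rightarrow> nat list \<Rightarrow> nat \<Rightarrow> nat \<Rightarrow> nat list" where
  "blk M a p x = (if p = 0 then (if x = 0 then a else word_plus a)
                  else (if x = 0 then word_bar M (word_plus a) else word_bar M a))"

fun phi :: "nat \<Rightarrow> nat list \<Rightarrow> nat \<Rightarrow> nat list \<Rightarrow> nat list" where
  "phi M a p [] = []"
| "phi M a p (x # xs) = blk M a p x @ phi M a x xs"

lemma blk_len: "a \<noteq> [] \<Longrightarrow> length (blk M a p x) = length a"
  by (simp add: blk_def)

lemma phi_len: "a \<noteq> [] \<Longrightarrow> length (phi M a p xs) = length xs * length a"
  by (induct xs arbitrary: p) (simp_all add: blk_len)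

lemma phi_append: "phi M a p (xs @ ys) = phi M a p xs @ phi M a (last (p # xs)) ys"
  by (induct xs arbitrary: p) simp_all

lemma blk_set:
  assumes "fundamental M a" shows "set (blk M a p x) \<subseteq> {0..M}"
  using fund_cases(1)[OF assms] fund_plus_set[OF assms] bar_set[of M] by (simp add: blk_def)

lemma phi_set:
  assumes "fundamental M a" shows "set (phi M a p xs) \<subseteq> {0..M}"
  by (induct xs arbitrary: p) (use blk_set[OF assms] in auto)

lemma blk_mono:
  assumes "fundamental M a" shows "llt (blk M a p 0) (blk M a p 1)"
proof -
  have ne: "a \<noteq> []" by (rule fund_cases(4)[OF assms])
  have l: "llt a (word_plus a)" by (rule llt_plus[OF ne])
  show ?thesis
  proof (cases "p = 0")
    case True then show ?thesis using l by (simp add: blk_def)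
  next
    case False
    have "llt (word_bar M (word_plus a)) (word_bar M a)" by (rule llt_bar[OF l fund_plus_set[OF assms]])
    then show ?thesis using False by (simp add: blk_def)
  qed
qed

lemma llt_Cons: "llt (x # xs) (y # ys) \<longleftrightarrow> x < y \<and> length xs = length ys \<or> (x = y \<and> llt xs ys)"
proof -
  have "llt (x # xs) (y # ys) \<longleftrightarrow> llt ([x] @ xs) ([y] @ ys)" by simp
  also have "\<dots> \<longleftrightarrow> x < y \<and> length xs = length ys \<or> (x = y \<and> llt xs ys)"
  proof
    assume h: "llt ([x] @ xs) ([y] @ ys)"
    then have "length xs = length ys" using llt_len by fastforce
    then show "x < y \<and> length xs = length ys \<or> (x = y \<and> llt xs ys)"
      using llt_append_cases[OF h] llt_single by auto
  next
    assume "x < y \<and> length xs = length ys \<or> (x = y \<and> llt xs ys)"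
    then show "llt ([x] @ xs) ([y] @ ys)"
    proof
      assume "x < y \<and> length xs = length ys"
      then show ?thesis using llt_append1 llt_single by blast
    next
      assume "x = y \<and> llt xs ys"
      then show ?thesis using llt_append2[of "[x]" "[y]"] by simp
    qed
  qed
  finally show ?thesis .
qed

lemma phi_mono:
  assumes fa: "fundamental M a"
  shows "llt xs ys \<Longrightarrow> set ys \<subseteq> {0,1} \<Longrightarrow> set xs \<subseteq> {0,1} \<Longrightarrow> llt (phi M a p xs) (phi M a p ys)"
proof (induct xs arbitrary: ys p)
  case Nil then show ?case by (simp add: llt_def)
next
  case (Cons x xs)
  have "length ys = Suc (length xs)" using llt_len[OF Cons.prems(1)] by simp
  then obtain y ys' where ys: "ys = y # ys'" by (cases ys) auto
  have ne: "a \<noteq> []" by (rule fund_cases(4)[OF fa])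
  from Cons.prems(1) ys have c: "x < y \<and> length xs = length ys' \<or> (x = y \<and> llt xs ys')" using llt_Cons by simp
  show ?case
  proof (cases "x = y")
    case True
    then have "llt xs ys'" using c by simp
    then have "llt (phi M a x xs) (phi M a x ys')" using Cons.hyps Cons.prems ys by simp
    then show ?thesis using ys True llt_append2[of "blk M a p x" "blk M a p x"] by simp
  next
    case False
    then have xy: "x = 0" "y = 1" "length xs = length ys'" using c Cons.prems ys by auto
    have "llt (blk M a p 0) (blk M a p 1)" by (rule blk_mono[OF fa])
    moreover have "length (phi M a 0 xs) = length (phi M a 1 ys')" using xy phi_len[OF ne] by simp
    ultimately show ?thesis using ys xy llt_append1 by simp
  qed
qed

lemma phi_reflect:
  assumes fa: "fundamental M a" and "length xs = length ys" "set ys \<subseteq> {0,1}" "set xs \<subseteq> {0,1}"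
    and "llt (phi M a p xs) (phi M a p ys)"
  shows "llt xs ys"
proof (rule ccontr)
  assume n: "\<not> llt xs ys"
  have "lle ys xs" using llt_not[OF assms(2)] n by simp
  then have "lle (phi M a p ys) (phi M a p xs)"
  proof (cases "ys = xs")
    case False
    then have "llt ys xs" using \<open>lle ys xs\<close> lle_def by simp
    then have "llt (phi M a p ys) (phi M a p xs)" by (rule phi_mono[OF fa _ assms(4) assms(3)])
    then show ?thesis by (simp add: lle_def)
  qed simp
  then have "llt (phi M a p xs) (phi M a p xs)" by (rule llt_lle_trans[OF assms(5)])
  then show False by (simp add: llt_irrefl)
qed

lemma phi_reflect_le:
  assumes fa: "fundamental M a" and "length xs = length ys" "set ys \<subseteq> {0,1}" "set xs \<subseteq> {0,1}"
    and "lle (phi M a p xs) (phi M a p ys)"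
  shows "lle xs ys"
proof (rule ccontr)
  assume n: "\<not> lle xs ys"
  have l2: "length ys = length xs" using assms(2) by simp
  have "llt ys xs" using llt_not[OF l2] n by simp
  then have "llt (phi M a p ys) (phi M a p xs)" by (rule phi_mono[OF fa _ assms(4) assms(3)])
  then have "llt (phi M a p xs) (phi M a p xs)" by (rule lle_llt_trans[OF assms(5)])
  then show False by (simp add: llt_irrefl)
qed

lemma blk_bar:
  assumes fa: "fundamental M a" and "p \<le> 1" "x \<le> 1"
  shows "word_bar M (blk M a p x) = blk M a (1 - p) (1 - x)"
proof -
  have s1: "word_bar M (word_bar M a) = a" by (rule word_bar_bar[OF fund_cases(1)[OF fa]])
  have s2: "word_bar M (word_bar M (word_plus a)) = word_plus a" by (rule word_bar_bar[OF fund_plus_set[OF fa]])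
  show ?thesis using assms s1 s2 by (cases "p = 0"; cases "x = 0") (auto simp: blk_def)
qed

lemma phi_bar:
  assumes fa: "fundamental M a"
  shows "p \<le> 1 \<Longrightarrow> set xs \<subseteq> {0,1} \<Longrightarrow> word_bar M (phi M a p xs) = phi M a (1 - p) (word_bar 1 xs)"
proof (induct xs arbitrary: p)
  case Nil then show ?case by simp
next
  case (Cons x xs)
  have x1: "x \<le> 1" using Cons.prems by auto
  have "word_bar M (phi M a p (x # xs)) = word_bar M (blk M a p x) @ word_bar M (phi M a x xs)" by simp
  also have "\<dots> = blk M a (1 - p) (1 - x) @ phi M a (1 - x) (word_bar 1 xs)"
    using blk_bar[OF fa Cons.prems(1) x1] Cons.hyps[of x] x1 Cons.prems(2) by simp
  also have "\<dots> = phi M a (1 - p) (word_bar 1 (x # xs))" by simp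
  finally show ?case .
qed

lemma sandwich:
  assumes "u \<noteq> []" "lle u w" "lle w (word_plus u)"
  shows "w = u \<or> w = word_plus u"
proof (cases "w = u")
  case False
  then have "llt u w" using assms(2) by (simp add: lle_def)
  then have "lle (word_plus u) w" by (rule llt_plus_le)
  then have "w = word_plus u" by (rule lle_antisym[OF assms(3)])
  then show ?thesis by simp
qed simp

lemma plus_bar_plus:
  assumes fa: "fundamental M a"
  shows "word_plus (word_bar M (word_plus a)) = word_bar M a"
proof -
  have ne: "a \<noteq> []" by (rule fund_cases(4)[OF fa])
  have l: "last a < M" using fund_letters(1)[OF fa] ne by (simp add: last_conv_nth)
  have "word_bar M (word_plus a) = word_bar M (butlast a) @ [M - (last a + 1)]"
    by (simp add: word_plus_def)
  then have "word_plus (word_bar M (word_plus a)) = word_bar M (butlast a) @ [M - (last a + 1) + 1]"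
    by (simp add: word_plus_def)
  also have "\<dots> = word_bar M (butlast a) @ [M - last a]" using l by simp
  also have "\<dots> = word_bar M a" using ne by (metis append_butlast_last_id word_bar_Cons word_bar_Nil word_bar_append)
  finally show ?thesis .
qed




definition gsel :: "nat \<Rightarrow> nat list \<Rightarrow> nat \<Rightarrow> nat \<Rightarrow> nat" where
  "gsel M a p d = (if p = 0 then (if d = a ! (length a - 1) then 0 else 1)
                   else (if d = M - a ! (length a - 1) then 1 else 0))"

lemma sbar_qr:
  assumes fa: "fundamental M a"
  shows "sbar M (qrseq M a) = conc (word_bar M (word_plus a)) (per a)"
proof -
  have ne: "a \<noteq> []" by (rule fund_cases(4)[OF fa])
  have nb: "word_bar M a \<noteq> []" using ne by (simp add: word_bar_def)
  have "sbar M (per (word_bar M a)) = per (word_bar M (word_bar M a))" by (rule per_bar[OF nb])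
  also have "\<dots> = per a" using word_bar_bar[OF fund_cases(1)[OF fa]] by simp
  finally show ?thesis unfolding qrseq_def sbar_conc by simp
qed

lemma parse_step:
  assumes fa: "fundamental M a"
    and up: "seq_le Y (qrseq M a)" and low: "seq_le (sbar M (qrseq M a)) Y"
    and inv: "(p = 0 \<and> seq_le (per a) Y) \<or> (p = 1 \<and> seq_le Y (per (word_bar M a)))"
  shows "Y = conc (blk M a p (gsel M a p (Y (length a - 1)))) (shift Y (length a))
     \<and> ((gsel M a p (Y (length a - 1)) = 0 \<and> seq_le (per a) (shift Y (length a)))
       \<or> (gsel M a p (Y (length a - 1)) = 1 \<and> seq_le (shift Y (length a)) (per (word_bar M a))))"
proof -
  let ?m = "length a"
  let ?ab = "word_bar M a"
  let ?ap = "word_plus a"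
  define w where "w = map Y [0..<?m]"
  have ne: "a \<noteq> []" by (rule fund_cases(4)[OF fa])
  have nb: "?ab \<noteq> []" using ne by (simp add: word_bar_def)
  have Yw: "Y = conc w (shift Y ?m)" unfolding w_def by (rule conc_shift)
  have lw: "length w = ?m" unfolding w_def by simp
  have lp: "length ?ap = ?m" using ne by simp
  have ym: "Y (?m - 1) = w ! (?m - 1)" unfolding w_def using ne by simp
  have pa: "per a = conc a (per a)" by (rule per_conc[OF ne])
  have pab: "per ?ab = conc ?ab (per ?ab)" by (rule per_conc[OF nb])
  have qr: "qrseq M a = conc ?ap (per ?ab)" by (simp add: qrseq_def)
  have sq: "sbar M (qrseq M a) = conc (word_bar M ?ap) (per a)" by (rule sbar_qr[OF fa])
  have last_lt: "a ! (?m - 1) < M" by (rule fund_letters(1)[OF fa])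
  have wl: "?ap ! (?m - 1) = a ! (?m - 1) + 1" by (rule word_plus_nth_last[OF ne])
  show ?thesis
  proof (cases "p = 0")
    case True
    then have i0: "seq_le (per a) Y" using inv by simp
    have "seq_le (conc a (per a)) (conc w (shift Y ?m))" using i0 pa Yw by simp
    then have l1: "lle a w" using seq_le_conc[of a w] lw lle_def by auto
    have "seq_le (conc w (shift Y ?m)) (conc ?ap (per ?ab))" using up qr Yw by simp
    then have l2: "lle w ?ap" using seq_le_conc[of w ?ap] lw lp lle_def by auto
    have "w = a \<or> w = ?ap" by (rule sandwich[OF ne l1 l2])
    then show ?thesis
    proof
      assume wa: "w = a"
      have g: "gsel M a p (Y (?m - 1)) = 0" using True ym wa by (simp add: gsel_def)
      have "seq_le (conc a (per a)) (conc a (shift Y ?m))" using i0 pa Yw wa by simp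
      then have "seq_le (per a) (shift Y ?m)" by (simp add: seq_le_conc_same)
      then show ?thesis using g True Yw wa by (simp add: blk_def)
    next
      assume wa: "w = ?ap"
      have g: "gsel M a p (Y (?m - 1)) = 1" using True ym wa wl by (simp add: gsel_def)
      have "seq_le (conc ?ap (shift Y ?m)) (conc ?ap (per ?ab))" using up qr Yw wa by simp
      then have "seq_le (shift Y ?m) (per ?ab)" by (simp add: seq_le_conc_same)
      then show ?thesis using g True Yw wa by (simp add: blk_def)
    qed
  next
    case False
    then have p1: "p = 1" and i1: "seq_le Y (per ?ab)" using inv by auto
    let ?u = "word_bar M ?ap"
    have nu: "?u \<noteq> []" using ne by (simp add: word_bar_def word_plus_def)
    have lu: "length ?u = ?m" using lp by simp
    have pu: "word_plus ?u = ?ab" by (rule plus_bar_plus[OF fa])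
    have "seq_le (conc ?u (per a)) (conc w (shift Y ?m))" using low sq Yw by simp
    then have l1: "lle ?u w" using seq_le_conc[of ?u w] lw lu lle_def by auto
    have "seq_le (conc w (shift Y ?m)) (conc ?ab (per ?ab))" using i1 pab Yw by simp
    then have l2: "lle w (word_plus ?u)" using seq_le_conc[of w ?ab] lw pu lle_def by auto
    have "w = ?u \<or> w = word_plus ?u" by (rule sandwich[OF nu l1 l2])
    then show ?thesis
    proof
      assume wa: "w = ?u"
      have "?u ! (?m - 1) = M - (a ! (?m - 1) + 1)" using wl ne by simp
      moreover have "M - (a ! (?m - 1) + 1) \<noteq> M - a ! (?m - 1)" using last_lt by linarith
      ultimately have g: "gsel M a p (Y (?m - 1)) = 0" using p1 ym wa by (simp add: gsel_def)
      have "seq_le (conc ?u (per a)) (conc ?u (shift Y ?m))" using low sq Yw wa by simp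
      then have "seq_le (per a) (shift Y ?m)" by (simp add: seq_le_conc_same)
      then show ?thesis using g p1 Yw wa by (simp add: blk_def)
    next
      assume wa: "w = word_plus ?u"
      then have wa': "w = ?ab" using pu by simp
      have "?ab ! (?m - 1) = M - a ! (?m - 1)" using ne by simp
      then have g: "gsel M a p (Y (?m - 1)) = 1" using p1 ym wa' by (simp add: gsel_def)
      have "seq_le (conc ?ab (shift Y ?m)) (conc ?ab (per ?ab))" using i1 pab Yw wa' by simp
      then have "seq_le (shift Y ?m) (per ?ab)" by (simp add: seq_le_conc_same)
      then show ?thesis using g p1 Yw wa' by (simp add: blk_def)
    qed
  qed
qed


fun stt :: "nat \<Rightarrow> nat list \<Rightarrow> (nat \<Rightarrow> nat) \<Rightarrow> nat \<Rightarrow> nat" where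
  "stt M a X 0 = 0"
| "stt M a X (Suc j) = gsel M a (stt M a X j) (X (length a - 1 + j * length a))"

definition gm :: "nat \<Rightarrow> nat list \<Rightarrow> (nat \<Rightarrow> nat) \<Rightarrow> nat \<Rightarrow> nat" where
  "gm M a X j = gsel M a (stt M a X j) (X (length a - 1 + j * length a))"

lemma stt_Suc: "stt M a X (Suc j) = gm M a X j" by (simp add: gm_def)

lemma gsel_le: "gsel M a p d \<le> 1" by (simp add: gsel_def)

lemma parse_one:
  assumes fa: "fundamental M a"
    and up: "\<And>k. seq_le (shift X k) (qrseq M a)"
    and low: "\<And>k. seq_le (sbar M (qrseq M a)) (shift X k)"
    and inv: "(stt M a X j = 0 \<and> seq_le (per a) (shift X (j * length a)))
          \<or> (stt M a X j = 1 \<and> seq_le (shift X (j * length a)) (per (word_bar M a)))"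
  shows "shift X (j * length a) = conc (blk M a (stt M a X j) (gm M a X j)) (shift X (Suc j * length a))
     \<and> ((gm M a X j = 0 \<and> seq_le (per a) (shift X (Suc j * length a)))
       \<or> (gm M a X j = 1 \<and> seq_le (shift X (Suc j * length a)) (per (word_bar M a))))"
proof -
  let ?m = "length a"
  have g: "gm M a X j = gsel M a (stt M a X j) (shift X (j * ?m) (?m - 1))" by (simp add: gm_def)
  have sh: "shift (shift X (j * ?m)) ?m = shift X (Suc j * ?m)"
    by (simp only: shift_shift) (simp add: add.commute)
  have ps: "shift X (j * ?m) = conc (blk M a (stt M a X j) (gm M a X j)) (shift (shift X (j * ?m)) ?m)
     \<and> ((gm M a X j = 0 \<and> seq_le (per a) (shift (shift X (j * ?m)) ?m))
       \<or> (gm M a X j = 1 \<and> seq_le (shift (shift X (j * ?m)) ?m) (per (word_bar M a))))"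
    using parse_step[OF fa up[of "j * ?m"] low[of "j * ?m"] inv] unfolding g[symmetric] .
  show ?thesis using ps unfolding sh .
qed

lemma parse_inv:
  assumes fa: "fundamental M a"
    and up: "\<And>k. seq_le (shift X k) (qrseq M a)"
    and low: "\<And>k. seq_le (sbar M (qrseq M a)) (shift X k)"
    and X0: "seq_le (per a) X"
  shows "(stt M a X j = 0 \<and> seq_le (per a) (shift X (j * length a)))
          \<or> (stt M a X j = 1 \<and> seq_le (shift X (j * length a)) (per (word_bar M a)))"
proof (induct j)
  case 0 then show ?case using X0 by simp
next
  case (Suc j)
  have "(gm M a X j = 0 \<and> seq_le (per a) (shift X (Suc j * length a)))
       \<or> (gm M a X j = 1 \<and> seq_le (shift X (Suc j * length a)) (per (word_bar M a)))"
    using parse_one[OF fa up low Suc] by blast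
  then show ?case unfolding stt_Suc .
qed

lemma parse_all:
  assumes fa: "fundamental M a"
    and up: "\<And>k. seq_le (shift X k) (qrseq M a)"
    and low: "\<And>k. seq_le (sbar M (qrseq M a)) (shift X k)"
    and X0: "seq_le (per a) X"
  shows "((stt M a X j = 0 \<and> seq_le (per a) (shift X (j * length a)))
          \<or> (stt M a X j = 1 \<and> seq_le (shift X (j * length a)) (per (word_bar M a))))
       \<and> shift X (j * length a) = conc (blk M a (stt M a X j) (gm M a X j)) (shift X (Suc j * length a))"
  using parse_inv[OF assms, of j] parse_one[OF fa up low parse_inv[OF assms, of j]] by blast

lemma stt_le: "stt M a X j \<le> 1"
proof (cases j)
  case 0 then show ?thesis by simp
next
  case (Suc i) then show ?thesis using gsel_le by (simp only: stt.simps)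
qed

lemma gm_le: "gm M a X j \<le> 1"
  unfolding gm_def by (rule gsel_le)

lemma last_stt: "last (0 # map (gm M a X) [0..<j]) = stt M a X j"
proof (cases j)
  case 0 then show ?thesis by simp
next
  case (Suc i) then show ?thesis by (simp add: stt_Suc del: stt.simps)
qed

lemma parse_prefix:
  assumes fa: "fundamental M a"
    and blocks: "\<And>j. shift X (j * length a) = conc (blk M a (stt M a X j) (gm M a X j)) (shift X (Suc j * length a))"
  shows "map X [0..<j * length a] = phi M a 0 (map (gm M a X) [0..<j])"
proof (induct j)
  case 0 then show ?case by simp
next
  case (Suc j)
  let ?m = "length a"
  have ne: "a \<noteq> []" by (rule fund_cases(4)[OF fa])
  have lb: "length (blk M a (stt M a X j) (gm M a X j)) = ?m" by (rule blk_len[OF ne])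
  have "map X [j * ?m..<Suc j * ?m] = map (shift X (j * ?m)) [0..<?m]"
    by (rule nth_equalityI) (simp_all add: add.commute)
  also have "\<dots> = blk M a (stt M a X j) (gm M a X j)"
    using blocks[of j] lb by (intro nth_equalityI) (simp_all add: conc_def)
  finally have blkeq: "map X [j * ?m..<Suc j * ?m] = blk M a (stt M a X j) (gm M a X j)" .
  have "[0..<j * ?m + ?m] = [0..<j * ?m] @ [j * ?m..<j * ?m + ?m]"
    by (rule upt_add_eq_append) simp
  then have "[0..<Suc j * ?m] = [0..<j * ?m] @ [j * ?m..<Suc j * ?m]"
    by (simp add: add.commute)
  then have "map X [0..<Suc j * ?m] = map X [0..<j * ?m] @ map X [j * ?m..<Suc j * ?m]" by simp
  also have "\<dots> = phi M a 0 (map (gm M a X) [0..<j]) @ blk M a (stt M a X j) (gm M a X j)"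
    using Suc blkeq by simp
  also have "\<dots> = phi M a 0 (map (gm M a X) [0..<Suc j])"
    using phi_append[of M a 0 "map (gm M a X) [0..<j]" "[gm M a X j]"] last_stt[of M a X j] by simp
  finally show ?case .
qed




lemma set01: "{0..1::nat} = {0,1}" by auto

lemma fund_low:
  assumes fb: "fundamental M b"
  shows "seq_le (sbar M (qrseq M b)) (shift (per b) k)"
proof -
  let ?n = "length b"
  have ne: "b \<noteq> []" by (rule fund_cases(4)[OF fb])
  have sq: "sbar M (qrseq M b) = conc (word_bar M (word_plus b)) (per b)" by (rule sbar_qr[OF fb])
  define i where "i = k mod ?n"
  have e: "shift (per b) k = shift (per b) i" unfolding i_def by (rule shift_per_mod)
  have il: "i < ?n" unfolding i_def using ne by simp
  have lp: "length (word_plus b) = ?n" using ne by simp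
  show ?thesis
  proof (cases "i = 0")
    case True
    have nw: "word_bar M (word_plus b) \<noteq> []" using lp ne by (metis length_0_conv word_bar_len)
    have "llt (word_bar M (word_plus b)) b"
      by (rule llt_first) (use ne nw lp fund_plus0(2)[OF fb] in auto)
    then have "seq_less (conc (word_bar M (word_plus b)) (per b)) (conc b (per b))"
      using seq_less_conc lp by simp
    then show ?thesis using e True sq per_conc[OF ne] seq_less_imp_le by simp
  next
    case False
    then have i1: "1 \<le> i" by simp
    have e2: "shift (per b) i = conc (drop i b) (per b)" using shift_per_lt[OF ne] il by simp
    have ni: "?n - i < ?n" using i1 il by simp
    have bp: "word_bar M (word_plus b) = word_bar M (take (?n - i) b) @ word_bar M (word_plus (drop (?n - i) b))"
      using word_plus_split[OF ni] by simp
    have sq2: "sbar M (qrseq M b) = conc (word_bar M (take (?n - i) b)) (conc (word_bar M (word_plus (drop (?n - i) b))) (per b))"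
      using sq bp by (simp add: conc_append)
    have l: "lle (word_bar M (take (?n - i) b)) (drop i b)" by (rule fund_F2[OF fb i1 il])
    have ln: "length (word_bar M (take (?n - i) b)) = length (drop i b)" using il by simp
    show ?thesis
    proof (cases "word_bar M (take (?n - i) b) = drop i b")
      case False
      then have "llt (word_bar M (take (?n - i) b)) (drop i b)" using l by (simp add: lle_def)
      then have "seq_le (sbar M (qrseq M b)) (conc (drop i b) (per b))"
        using sq2 seq_le_conc[OF ln] by simp
      then show ?thesis using e e2 by simp
    next
      case True
      have sdp: "set (word_plus (drop (?n - i) b)) \<subseteq> {0..M}"
      proof -
        have "set (drop (?n - i) (word_plus b)) \<subseteq> {0..M}"
          using order_trans[OF set_drop_subset fund_plus_set[OF fb]] .
        then show ?thesis using drop_word_plus[OF ni] by simp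
      qed
      have st: "set (take i b) \<subseteq> {0..M}" using order_trans[OF set_take_subset fund_cases(1)[OF fb]] .
      have "llt (word_bar M (word_plus (drop (?n - i) b))) (word_bar M (word_bar M (take i b)))"
        by (rule llt_bar[OF fund_F3b[OF fb i1 il] sdp])
      then have l2: "llt (word_bar M (word_plus (drop (?n - i) b))) (take i b)"
        by (simp only: word_bar_bar[OF st])
      have pb: "per b = conc (take i b) (conc (drop i b) (per b))" by (rule per_split[OF ne])
      have "seq_less (conc (word_bar M (word_plus (drop (?n - i) b))) (per b)) (per b)"
        using pb l2 seq_less_conc llt_len by metis
      then have "seq_le (conc (drop i b) (conc (word_bar M (word_plus (drop (?n - i) b))) (per b))) (conc (drop i b) (per b))"
        using seq_le_conc_same seq_less_imp_le by blast
      then show ?thesis using sq2 True e e2 by simp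
    qed
  qed
qed

lemma fund_prim:
  assumes fa: "fundamental M a" and fb: "fundamental M b" and eq: "per a = per b"
  shows "a = b"
proof -
  have na: "a \<noteq> []" by (rule fund_cases(4)[OF fa])
  have nb: "b \<noteq> []" by (rule fund_cases(4)[OF fb])
  have "\<not> length a < length b"
  proof
    assume lt: "length a < length b"
    have "shift (per b) (length a) = per b"
      using shift_per_mult[of a 1] eq by simp
    moreover have "seq_less (shift (per b) (length a)) (per b)"
      by (rule fund_shift_less[OF fb]) (use na lt in \<open>auto simp: Suc_le_eq\<close>)
    ultimately show False using seq_less_irrefl by simp
  qed
  moreover have "\<not> length b < length a"
  proof
    assume lt: "length b < length a"
    have "shift (per a) (length b) = per a"
      using shift_per_mult[of b 1] eq by simp
    moreover have "seq_less (shift (per a) (length b)) (per a)"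
      by (rule fund_shift_less[OF fa]) (use nb lt in \<open>auto simp: Suc_le_eq\<close>)
    ultimately show False using seq_less_irrefl by simp
  qed
  ultimately have l: "length a = length b" by simp
  show ?thesis
  proof (rule nth_equalityI)
    show "length a = length b" by (fact l)
    fix i assume "i < length a"
    then have "per a i = a ! i" "per b i = b ! i" using l by (simp_all add: per_def)
    then show "a ! i = b ! i" using eq by simp
  qed
qed


lemma comb_parse:
  assumes fa: "fundamental M a" and fb: "fundamental M b" and ab: "a \<noteq> b"
    and H1: "seq_le (per a) (per b)" and H2: "seq_le (qrseq M b) (qrseq M a)"
  shows "\<exists>c. 2 \<le> length c \<and> set c \<subseteq> {0,1} \<and> c ! 0 = 1 \<and> c ! (length c - 1) = 0
             \<and> b = phi M a 0 c"
proof -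
  let ?m = "length a" and ?n = "length b"
  let ?X = "per b"
  let ?ab = "word_bar M a" and ?ap = "word_plus a"
  let ?g = "gm M a ?X" and ?st = "stt M a ?X"
  have na: "a \<noteq> []" by (rule fund_cases(4)[OF fa])
  have nb: "b \<noteq> []" by (rule fund_cases(4)[OF fb])
  have nab: "?ab \<noteq> []" using na by (simp add: word_bar_def)
  have lp: "length ?ap = ?m" using na by simp
  have Xc: "?X = conc b ?X" by (rule per_conc[OF nb])
  have Xlt: "seq_less ?X (qrseq M b)"
  proof -
    have "llt b (word_plus b)" by (rule llt_plus[OF nb])
    then have "seq_less (conc b ?X) (conc (word_plus b) (per (word_bar M b)))"
      using seq_less_conc nb by simp
    then show ?thesis using Xc by (simp add: qrseq_def)
  qed
  have up: "\<And>k. seq_le (shift ?X k) (qrseq M a)"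
  proof -
    fix k
    have "seq_less (shift ?X k) (qrseq M b)"
      by (rule seq_le_less_trans[OF fund_shift_le[OF fb] Xlt])
    then show "seq_le (shift ?X k) (qrseq M a)"
      using seq_less_le_trans[OF _ H2] seq_less_imp_le by blast
  qed
  have low: "\<And>k. seq_le (sbar M (qrseq M a)) (shift ?X k)"
  proof -
    fix k
    have bq: "\<forall>i. qrseq M a i \<le> M" using good_qr[OF fa] by (simp add: good_def)
    have "seq_le (sbar M (qrseq M a)) (sbar M (qrseq M b))" by (rule seq_le_sbar[OF H2 bq])
    then show "seq_le (sbar M (qrseq M a)) (shift ?X k)" using seq_le_trans fund_low[OF fb] by blast
  qed
  note PA = parse_all[OF fa up low H1]
  have BL: "\<And>j. shift ?X (j * ?m) = conc (blk M a (?st j) (?g j)) (shift ?X (Suc j * ?m))"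
    using PA by blast
  have g01: "\<And>j. ?g j = 0 \<or> ?g j = 1" using gm_le by (metis le_SucE le_zero_eq One_nat_def)
  have s01: "\<And>j. ?st j = 0 \<or> ?st j = 1" using stt_le by (metis le_SucE le_zero_eq One_nat_def)
  have g0: "?g 0 = 1"
  proof (rule ccontr)
    assume "?g 0 \<noteq> 1"
    then have g00: "?g 0 = 0" using g01[of 0] by linarith
    have B0: "?X = conc a (shift ?X ?m)" using BL[of 0] g00 by (simp add: blk_def)
    have allz: "?g j = 0" for j
    proof (induct j)
      case 0 then show ?case by (fact g00)
    next
      case (Suc j)
      show ?case
      proof (rule ccontr)
        assume "?g (Suc j) \<noteq> 0"
        then have g1: "?g (Suc j) = 1" using g01[of "Suc j"] by linarith
        have "?st (Suc j) = 0" using Suc by (simp add: stt_Suc del: stt.simps)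
        then have "shift ?X (Suc j * ?m) = conc ?ap (shift ?X (Suc (Suc j) * ?m))"
          using BL[of "Suc j"] g1 by (simp add: blk_def)
        moreover have "llt a ?ap" by (rule llt_plus[OF na])
        ultimately have "seq_less ?X (shift ?X (Suc j * ?m))"
          using B0 seq_less_conc lp by metis
        then show False using fund_shift_le[OF fb] seq_less_le_trans seq_less_irrefl by blast
      qed
    qed
    have allst: "?st j = 0" for j
    proof (cases j)
      case 0 then show ?thesis by simp
    next
      case (Suc i) then show ?thesis using allz[of i] by (simp add: stt_Suc del: stt.simps)
    qed
    have "?X = per a"
    proof (rule ext)
      fix i
      define j where "j = i div ?m"
      define r where "r = i mod ?m"
      have i: "i = r + j * ?m" unfolding j_def r_def by simp
      have rl: "r < ?m" unfolding r_def using na by simp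
      have "shift ?X (j * ?m) = conc a (shift ?X (Suc j * ?m))"
        using BL[of j] allz[of j] allst[of j] by (simp add: blk_def)
      then have "shift ?X (j * ?m) r = a ! r" using rl by (simp add: conc_def)
      then have "?X i = a ! r" using i by simp
      moreover have "per a i = a ! r" unfolding r_def by (simp add: per_def)
      ultimately show "?X i = per a i" by simp
    qed
    then have "a = b" using fund_prim[OF fa fb] by simp
    then show False using ab by simp
  qed
  have X0: "?X = conc ?ap (shift ?X ?m)" using BL[of 0] g0 by (simp add: blk_def)
  have shn: "shift ?X ?n = ?X" using shift_per_mult[of b 1] by simp
  define k where "k = ?n div ?m"
  define r where "r = ?n mod ?m"
  have nkr: "?n = k * ?m + r" unfolding k_def r_def by simp
  have r0: "r = 0"
  proof (rule ccontr)
    assume "r \<noteq> 0"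
    then have r1: "1 \<le> r" by simp
    have rl: "r < ?m" unfolding r_def using na by simp
    have mr: "?m - r < ?m" using r1 rl by simp
    let ?Y = "shift ?X (k * ?m)"
    have Ysh: "shift ?Y r = ?X" using shn nkr by (simp add: add.commute)
    have Yc: "?Y = conc (map ?Y [0..<r]) ?X"
    proof -
      have "?Y = conc (map ?Y [0..<r]) (shift ?Y r)" by (rule conc_shift)
      then show ?thesis unfolding Ysh .
    qed
    have lbk: "length (blk M a (?st k) (?g k)) = ?m" by (rule blk_len[OF na])
    have mY: "map ?Y [0..<r] = take r (blk M a (?st k) (?g k))"
    proof (rule nth_equalityI)
      show "length (map ?Y [0..<r]) = length (take r (blk M a (?st k) (?g k)))" using lbk rl by simp
      fix i assume "i < length (map ?Y [0..<r])"
      then have ir: "i < r" by simp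
      have "?Y i = conc (blk M a (?st k) (?g k)) (shift ?X (Suc k * ?m)) i" using BL[of k] by metis
      then show "map ?Y [0..<r] ! i = take r (blk M a (?st k) (?g k)) ! i"
        using ir rl lbk by (simp add: conc_def)
    qed
    have apsplit: "?ap = take (?m - r) a @ word_plus (drop (?m - r) a)" by (rule word_plus_split[OF mr])
    have Xs: "?X = conc (take (?m - r) a @ word_plus (drop (?m - r) a)) (shift ?X ?m)"
      using X0 unfolding apsplit .
    have F3b: "llt (word_bar M (take r a)) (word_plus (drop (?m - r) a))" by (rule fund_F3b[OF fa r1 rl])
    have pabs: "per ?ab = conc (word_bar M (take r a)) (conc (drop r ?ab) (per ?ab))"
      unfolding word_bar_take by (rule per_split[OF nab])
    show False
    proof (cases "?st k = 0")
      case True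
      have tk: "take r (blk M a (?st k) (?g k)) = take r a"
        using True take_word_plus[OF rl] by (simp add: blk_def)
      have qa: "qrseq M a = conc (take r a) (conc (word_plus (drop r a)) (per ?ab))"
        using word_plus_split[OF rl]
        by (simp add: qrseq_def conc_append[symmetric])
      have Y': "?Y = conc (take r a) ?X" using Yc unfolding mY tk .
      have "seq_le (conc (take r a) ?X) (conc (take r a) (conc (word_plus (drop r a)) (per ?ab)))"
        using up[of "k * ?m"] unfolding Y' qa .
      then have le0: "seq_le ?X (conc (word_plus (drop r a)) (per ?ab))" unfolding seq_le_conc_same .
      have R: "conc (word_plus (drop r a)) (per ?ab) = conc (word_plus (drop r a) @ word_bar M (take r a)) (conc (drop r ?ab) (per ?ab))"
        unfolding conc_append by (rule arg_cong[where f="conc (word_plus (drop r a))", OF pabs])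
      have le1: "seq_le ?X (conc (word_plus (drop r a) @ word_bar M (take r a)) (conc (drop r ?ab) (per ?ab)))"
        using le0 unfolding R .
      have "llt (word_plus (drop r a) @ word_bar M (take r a)) (take (?m - r) a @ word_plus (drop (?m - r) a))"
        by (rule llt_append2[OF fund_F3a[OF fa r1 rl] F3b])
      then have "seq_less (conc (word_plus (drop r a) @ word_bar M (take r a)) (conc (drop r ?ab) (per ?ab))) (conc (take (?m - r) a @ word_plus (drop (?m - r) a)) (shift ?X ?m))"
        using seq_less_conc llt_len by blast
      then have "seq_less (conc (word_plus (drop r a) @ word_bar M (take r a)) (conc (drop r ?ab) (per ?ab))) ?X"
        by (simp only: Xs[symmetric])
      then show False using le1 seq_le_less_trans seq_less_irrefl by blast
    next
      case False
      then have s1: "?st k = 1" using s01[of k] by linarith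
      have tk: "take r (blk M a (?st k) (?g k)) = word_bar M (take r a)"
        using s1 take_word_plus[OF rl] by (simp add: blk_def word_bar_take[symmetric])
      have pk: "(?st k = 0 \<and> seq_le (per a) ?Y) \<or> (?st k = 1 \<and> seq_le ?Y (per ?ab))"
        using PA[of k] by (rule conjunct1)
      have inv: "seq_le ?Y (per ?ab)" using pk s1 by simp
      have Y': "?Y = conc (word_bar M (take r a)) ?X" using Yc unfolding mY tk .
      have inv2: "seq_le (conc (word_bar M (take r a)) ?X) (per ?ab)" using inv unfolding Y' .
      have "seq_le (conc (word_bar M (take r a)) ?X) (conc (word_bar M (take r a)) (conc (drop r ?ab) (per ?ab)))"
        using inv2 by (simp only: pabs[symmetric])
      then have le0: "seq_le ?X (conc (drop r ?ab) (per ?ab))" unfolding seq_le_conc_same .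
      have R: "conc (drop r ?ab) (per ?ab) = conc (word_bar M (drop r a) @ word_bar M (take r a)) (conc (drop r ?ab) (per ?ab))"
        unfolding conc_append word_bar_drop by (rule arg_cong[where f="conc (drop r ?ab)", OF pabs])
      have le1: "seq_le ?X (conc (word_bar M (drop r a) @ word_bar M (take r a)) (conc (drop r ?ab) (per ?ab)))"
        using le0 by (simp only: R[symmetric])
      have "llt (word_bar M (drop r a) @ word_bar M (take r a)) (take (?m - r) a @ word_plus (drop (?m - r) a))"
        by (rule llt_append2[OF fund_F2'[OF fa r1 rl] F3b])
      then have "seq_less (conc (word_bar M (drop r a) @ word_bar M (take r a)) (conc (drop r ?ab) (per ?ab))) (conc (take (?m - r) a @ word_plus (drop (?m - r) a)) (shift ?X ?m))"
        using seq_less_conc llt_len by blast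
      then have "seq_less (conc (word_bar M (drop r a) @ word_bar M (take r a)) (conc (drop r ?ab) (per ?ab))) ?X"
        by (simp only: Xs[symmetric])
      then show False using le1 seq_le_less_trans seq_less_irrefl by blast
    qed
  qed
  have nkm: "?n = k * ?m" using nkr r0 by simp
  have k1: "1 \<le> k" using nkm nb by (cases k) auto
  have stk: "?st k = 0"
  proof (rule ccontr)
    assume "?st k \<noteq> 0"
    then have s1: "?st k = 1" using s01[of k] by linarith
    have pk: "(?st k = 0 \<and> seq_le (per a) (shift ?X (k * ?m))) \<or> (?st k = 1 \<and> seq_le (shift ?X (k * ?m)) (per ?ab))"
      using PA[of k] by (rule conjunct1)
    have "seq_le (shift ?X (k * ?m)) (per ?ab)" using pk s1 by simp
    moreover have "shift ?X (k * ?m) = ?X" using shn nkm by simp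
    ultimately have le1: "seq_le ?X (conc ?ab (per ?ab))" by (simp only: per_conc[OF nab, symmetric])
    have nab': "?ab \<noteq> []" by (fact nab)
    have "llt ?ab ?ap"
      by (rule llt_first) (use na nab' lp fund_plus0(1)[OF fa] in auto)
    then have "seq_less (conc ?ab (per ?ab)) (conc ?ap (shift ?X ?m))" using seq_less_conc lp by simp
    then have "seq_less (conc ?ab (per ?ab)) ?X" by (simp only: X0[symmetric])
    then show False using le1 seq_le_less_trans seq_less_irrefl by blast
  qed
  have k2: "2 \<le> k"
  proof (rule ccontr)
    assume "\<not> 2 \<le> k"
    then have "k = 1" using k1 by simp
    then show False using stk g0 by (simp add: stt_Suc del: stt.simps)
  qed
  define c where "c = map ?g [0..<k]"
  have lc: "length c = k" unfolding c_def by simp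
  have g01': "\<And>j. ?g j \<in> {0,1}" using g01 by blast
  have sc: "set c \<subseteq> {0,1}"
  proof
    fix x assume "x \<in> set c"
    then obtain j where "x = ?g j" unfolding c_def by auto
    then show "x \<in> {0,1}" using g01'[of j] by simp
  qed
  have c0: "c ! 0 = 1" unfolding c_def using g0 k2 by simp
  have cl: "c ! (length c - 1) = 0"
  proof -
    have "c ! (k - 1) = ?g (k - 1)" unfolding c_def using k1 by simp
    also have "\<dots> = ?st k" using k1 stt_Suc[of M a ?X "k - 1"] by simp
    finally show ?thesis using stk lc by simp
  qed
  have "b = map ?X [0..<?n]"
    by (rule nth_equalityI) (simp_all add: per_def)
  also have "\<dots> = phi M a 0 c" unfolding c_def nkm by (rule parse_prefix[OF fa BL])
  finally have "b = phi M a 0 c" .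
  then show ?thesis using lc k2 sc c0 cl by blast
qed




lemma llt_at: "length u = length v \<Longrightarrow> j < length u \<Longrightarrow> (\<And>l. l < j \<Longrightarrow> u!l = v!l) \<Longrightarrow> u!j < v!j \<Longrightarrow> llt u v"
  unfolding llt_def by blast

lemma lle_ones:
  assumes "lle u v" "\<And>l. l < t \<Longrightarrow> u!l = 1" "t \<le> length u" "set v \<subseteq> {0,1}"
  shows "\<And>l. l < t \<Longrightarrow> v!l = 1"
proof -
  fix l assume lt: "l < t"
  show "v!l = 1"
  proof (cases "u = v")
    case True then show ?thesis using assms(2) lt by simp
  next
    case False
    then have "llt u v" using assms(1) by (simp add: lle_def)
    then obtain j where j: "length u = length v" "j < length u" "\<forall>i<j. u!i = v!i" "u!j < v!j"
      unfolding llt_def by blast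
    have "v!j \<in> {0,1}" using assms(4) j nth_mem by (metis subsetD)
    then have "v!j \<le> 1" by auto
    then have "u!j = 0" using j(4) by simp
    then have "t \<le> j" using assms(2) by (metis not_le zero_neq_one)
    then show ?thesis using j(3) assms(2) lt by (metis order.strict_trans2)
  qed
qed

lemma llt_zeros:
  assumes "llt v u" "\<And>l. l < t \<Longrightarrow> u!l = 0"
  shows "\<And>l. l < t \<Longrightarrow> v!l = 0"
proof -
  fix l assume lt: "l < t"
  obtain j where j: "length v = length u" "j < length v" "\<forall>i<j. v!i = u!i" "v!j < u!j"
    using assms(1) unfolding llt_def by blast
  have "t \<le> j" using assms(2) j(4) by (metis not_le not_less_zero)
  then show "v!l = 0" using j(3) assms(2) lt by (metis order.strict_trans2)
qed

lemma cfund_local: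
  assumes fa: "fundamental M a" and fb: "fundamental M b"
    and lc: "2 \<le> length c" and sc: "set c \<subseteq> {0,1}" and bc: "b = phi M a 0 c"
    and i1: "1 \<le> i" and ik: "i < length c"
  shows "c ! (i - 1) = 0 \<Longrightarrow> llt (drop i c) (take (length c - i) c)"
    and "c ! (i - 1) = 1 \<Longrightarrow> lle (word_bar 1 (take (length c - i) c)) (drop i c)"
proof -
  let ?m = "length a" and ?k = "length c"
  let ?x = "drop i c" and ?y = "take (?k - i) c"
  have na: "a \<noteq> []" by (rule fund_cases(4)[OF fa])
  have m1: "1 \<le> ?m" using na by (simp add: Suc_le_eq)
  have lb: "length b = ?k * ?m" using bc phi_len[OF na] by simp
  have lx: "length ?x = length ?y" using ik by simp
  have sx: "set ?x \<subseteq> {0,1}" using order_trans[OF set_drop_subset sc] .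
  have sy: "set ?y \<subseteq> {0,1}" using order_trans[OF set_take_subset sc] .
  have lastc: "last (0 # take i c) = c ! (i - 1)"
  proof -
    have "length (take i c) \<ge> 1" using i1 ik by simp
    then have tne: "take i c \<noteq> []" by (metis list.size(3) not_one_le_zero)
    have lt: "length (take i c) = i" using ik by simp
    have "last (0 # take i c) = last (take i c)" using tne by simp
    also have "\<dots> = take i c ! (length (take i c) - 1)" by (rule last_conv_nth[OF tne])
    also have "\<dots> = take i c ! (i - 1)" using lt by simp
    also have "\<dots> = c ! (i - 1)" using i1 by simp
    finally show ?thesis .
  qed
  have d1: "phi M a 0 c = phi M a 0 (take i c) @ phi M a (c ! (i - 1)) ?x"
    using phi_append[of M a 0 "take i c" "drop i c"] lastc by simp
  have l1: "length (phi M a 0 (take i c)) = i * ?m" using phi_len[OF na] ik by simp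
  have dropb: "drop (i * ?m) b = phi M a (c ! (i - 1)) ?x" using bc d1 l1 by (metis append_eq_conv_conj)
  have d2: "phi M a 0 c = phi M a 0 ?y @ phi M a (last (0 # ?y)) (drop (?k - i) c)"
    using phi_append[of M a 0 ?y "drop (?k - i) c"] by simp
  have l2: "length (phi M a 0 ?y) = (?k - i) * ?m" using phi_len[OF na] ik by simp
  have nim: "length b - i * ?m = (?k - i) * ?m" using lb by (simp add: diff_mult_distrib)
  have takeb: "take (length b - i * ?m) b = phi M a 0 ?y" using bc d2 l2 nim by (metis append_eq_conv_conj)
  have im1: "1 \<le> i * ?m" using i1 m1 by (metis mult_le_mono nat_mult_1)
  have imn: "i * ?m < length b" using lb ik na by simp
  have F1: "llt (drop (i * ?m) b) (take (length b - i * ?m) b)" by (rule fund_F1[OF fb im1 imn])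
  have F2: "lle (word_bar M (take (length b - i * ?m) b)) (drop (i * ?m) b)" by (rule fund_F2[OF fb im1 imn])
  show "c ! (i - 1) = 0 \<Longrightarrow> llt ?x ?y"
  proof -
    assume "c ! (i - 1) = 0"
    then have "llt (phi M a 0 ?x) (phi M a 0 ?y)" using F1 dropb takeb by simp
    then show "llt ?x ?y" by (rule phi_reflect[OF fa lx sy sx])
  qed
  show "c ! (i - 1) = 1 \<Longrightarrow> lle (word_bar 1 ?y) ?x"
  proof -
    assume c1: "c ! (i - 1) = 1"
    have sx': "set ?x \<subseteq> {0..1}" using sx set01 by simp
    have sbx: "set (word_bar 1 ?x) \<subseteq> {0,1}" using bar_set[of 1 ?x] set01 by simp
    have pb: "word_bar M (phi M a 0 (word_bar 1 ?x)) = phi M a 1 ?x"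
      using phi_bar[OF fa _ sbx, of 0] word_bar_bar[OF sx'] by simp
    have "lle (word_bar M (phi M a 0 ?y)) (word_bar M (phi M a 0 (word_bar 1 ?x)))"
      using F2 dropb takeb c1 pb by simp
    then have "lle (word_bar M (word_bar M (phi M a 0 (word_bar 1 ?x)))) (word_bar M (word_bar M (phi M a 0 ?y)))"
      by (rule lle_bar[OF _ bar_set])
    then have "lle (phi M a 0 (word_bar 1 ?x)) (phi M a 0 ?y)"
      by (simp only: word_bar_bar[OF phi_set[OF fa]])
    moreover have lbx: "length (word_bar 1 ?x) = length ?y" using lx by simp
    ultimately have "lle (word_bar 1 ?x) ?y" using phi_reflect_le[OF fa lbx sy sbx] by blast
    then have "lle (word_bar 1 ?y) (word_bar 1 (word_bar 1 ?x))"
      by (rule lle_bar) (use sy set01 in simp)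
    then show "lle (word_bar 1 ?y) ?x" by (simp only: word_bar_bar[OF sx'])
  qed
qed


lemma c01: "set c \<subseteq> {0,1} \<Longrightarrow> l < length c \<Longrightarrow> c ! l = 0 \<or> c ! l = 1"
proof -
  assume h: "set c \<subseteq> {0,1}" "l < length c"
  then have "c ! l \<in> set c" by simp
  then have "c ! l \<in> {0,1}" using h(1) by (rule subsetD[rotated])
  then show ?thesis by simp
qed

lemma cfund:
  assumes fa: "fundamental M a" and fb: "fundamental M b"
    and lc: "2 \<le> length c" and sc: "set c \<subseteq> {0,1}" and c0: "c ! 0 = 1"
    and cl: "c ! (length c - 1) = 0" and bc: "b = phi M a 0 c"
  shows "fundamental 1 c"
proof -
  let ?k = "length c"
  note U0 = cfund_local(1)[OF fa fb lc sc bc]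
  note L1 = cfund_local(2)[OF fa fb lc sc bc]
  have ex0: "\<exists>t. c ! t = 0" using cl by blast
  define t where "t = (LEAST t. c ! t = 0)"
  have ct: "c ! t = 0" unfolding t_def by (rule LeastI_ex[OF ex0])
  have tle: "t \<le> ?k - 1" unfolding t_def by (rule Least_le) (fact cl)
  have tk: "t < ?k" using tle lc by simp
  have below: "\<And>l. l < t \<Longrightarrow> c ! l = 1"
  proof -
    fix l assume "l < t"
    then have n0: "c ! l \<noteq> 0" unfolding t_def by (rule not_less_Least)
    have "l < ?k" using \<open>l < t\<close> tk by simp
    then show "c ! l = 1" using c01[OF sc \<open>l < ?k\<close>] n0 by simp
  qed
  have U: "llt (drop i c) (take (?k - i) c)" if i1: "1 \<le> i" and ik: "i < ?k" for i
  proof (cases "c ! (i - 1) = 0")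
    case True then show ?thesis by (rule U0[OF i1 ik])
  next
    case False
    then have ci: "c ! (i - 1) = 1" using c01[OF sc, of "i - 1"] ik by simp
    show ?thesis
    proof (rule ccontr)
      assume "\<not> llt (drop i c) (take (?k - i) c)"
      then have le: "lle (take (?k - i) c) (drop i c)" using llt_not[of "drop i c" "take (?k - i) c"] ik by simp
      have sd: "set (drop i c) \<subseteq> {0,1}" using order_trans[OF set_drop_subset sc] .
      show False
      proof (cases "?k - i \<le> t")
        case True
        have ones: "\<And>l. l < ?k - i \<Longrightarrow> take (?k - i) c ! l = 1" using below True by simp
        have dd: "\<And>l. l < ?k - i \<Longrightarrow> drop i c ! l = 1"
          by (rule lle_ones[OF le ones _ sd]) (use ik in simp_all)
        have "drop i c ! (?k - i - 1) = 1" by (rule dd) (use ik in simp)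
        moreover have "drop i c ! (?k - i - 1) = c ! (?k - 1)" using ik i1 by simp
        ultimately show False using cl by simp
      next
        case False
        then have tki: "t < ?k - i" by simp
        have ones: "\<And>l. l < t \<Longrightarrow> take (?k - i) c ! l = 1" using below tki by simp
        have d1: "\<And>l. l < t \<Longrightarrow> drop i c ! l = 1"
          by (rule lle_ones[OF le ones _ sd]) (use tki in simp_all)
        have after: "\<And>l. i \<le> l \<Longrightarrow> l < i + t \<Longrightarrow> c ! l = 1"
        proof -
          fix l assume "i \<le> l" "l < i + t"
          then have "drop i c ! (l - i) = 1" using d1 by simp
          then show "c ! l = 1" using \<open>i \<le> l\<close> \<open>l < i + t\<close> tki by simp
        qed
        have Pi: "\<forall>l. i - 1 \<le> l \<and> l < i \<longrightarrow> c ! l = 1"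
        proof (intro allI impI)
          fix l assume "i - 1 \<le> l \<and> l < i"
          then have "l = i - 1" using i1 by linarith
          then show "c ! l = 1" using ci by simp
        qed
        have exs: "\<exists>s. \<forall>l. s \<le> l \<and> l < i \<longrightarrow> c ! l = 1" using Pi by blast
        define s where "s = (LEAST s. \<forall>l. s \<le> l \<and> l < i \<longrightarrow> c ! l = 1)"
        have sP: "\<forall>l. s \<le> l \<and> l < i \<longrightarrow> c ! l = 1" unfolding s_def by (rule LeastI_ex[OF exs])
        have sle: "s \<le> i - 1" unfolding s_def by (rule Least_le) (fact Pi)
        have run: "\<And>l. s \<le> l \<Longrightarrow> l < i + t \<Longrightarrow> c ! l = 1"
        proof -
          fix l assume h: "s \<le> l" "l < i + t"
          show "c ! l = 1"
          proof (cases "l < i")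
            case True then show ?thesis using sP h by blast
          next
            case False then show ?thesis using after h by simp
          qed
        qed
        show False
        proof (cases "s = 0")
          case True
          have "c ! t = 1" using run True i1 by simp
          then show False using ct by simp
        next
          case False
          have "c ! (s - 1) \<noteq> 1"
          proof
            assume cs: "c ! (s - 1) = 1"
            have "\<forall>l. s - 1 \<le> l \<and> l < i \<longrightarrow> c ! l = 1"
            proof (intro allI impI)
              fix l assume "s - 1 \<le> l \<and> l < i"
              then show "c ! l = 1" using cs sP by (cases "l = s - 1") auto
            qed
            then have "s \<le> s - 1" unfolding s_def by (rule Least_le)
            then show False using False by simp
          qed
          then have cs0: "c ! (s - 1) = 0" using c01[OF sc, of "s - 1"] sle ik by simp
          have s1: "1 \<le> s" using False by simp
          have sk: "s < ?k" using sle ik by simp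
          have lt1: "llt (drop s c) (take (?k - s) c)" by (rule U0[OF s1 sk cs0])
          have lt2: "llt (take (?k - s) c) (drop s c)"
          proof (rule llt_at[of _ _ t])
            show "length (take (?k - s) c) = length (drop s c)" using sk by simp
            show "t < length (take (?k - s) c)" using tki sle by simp
            fix l assume "l < t"
            then have "c ! l = 1" "c ! (s + l) = 1" using below run sle by auto
            then show "take (?k - s) c ! l = drop s c ! l" using \<open>l < t\<close> tki sle sk by simp
          next
            have "c ! (s + t) = 1" using run sle i1 by simp
            then show "take (?k - s) c ! t < drop s c ! t" using ct tki sle sk by simp
          qed
          show False using lt1 lt2 llt_asym by blast
        qed
      qed
    qed
  qed
  have L: "lle (word_bar 1 (take (?k - i) c)) (drop i c)" if i1: "1 \<le> i" and ik: "i < ?k" for i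
  proof (cases "c ! (i - 1) = 1")
    case True then show ?thesis by (rule L1[OF i1 ik])
  next
    case False
    then have ci: "c ! (i - 1) = 0" using c01[OF sc, of "i - 1"] ik by simp
    show ?thesis
    proof (rule ccontr)
      assume "\<not> lle (word_bar 1 (take (?k - i) c)) (drop i c)"
      then have lt: "llt (drop i c) (word_bar 1 (take (?k - i) c))"
        using llt_not[of "drop i c" "word_bar 1 (take (?k - i) c)"] ik by simp
      show False
      proof (cases "?k - i \<le> t")
        case True
        have zs: "\<And>l. l < ?k - i \<Longrightarrow> word_bar 1 (take (?k - i) c) ! l = 0" using below True by simp
        obtain j where j: "j < length (drop i c)" "drop i c ! j < word_bar 1 (take (?k - i) c) ! j"
          using lt unfolding llt_def by blast
        then show False using zs ik by simp
      next
        case False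
        then have tki: "t < ?k - i" by simp
        have zs: "\<And>l. l < t \<Longrightarrow> word_bar 1 (take (?k - i) c) ! l = 0" using below tki by simp
        have d0: "\<And>l. l < t \<Longrightarrow> drop i c ! l = 0" by (rule llt_zeros[OF lt zs])
        have after: "\<And>l. i \<le> l \<Longrightarrow> l < i + t \<Longrightarrow> c ! l = 0"
        proof -
          fix l assume "i \<le> l" "l < i + t"
          then have "drop i c ! (l - i) = 0" using d0 by simp
          then show "c ! l = 0" using \<open>i \<le> l\<close> \<open>l < i + t\<close> tki by simp
        qed
        have Pi: "\<forall>l. i - 1 \<le> l \<and> l < i \<longrightarrow> c ! l = 0"
        proof (intro allI impI)
          fix l assume "i - 1 \<le> l \<and> l < i"
          then have "l = i - 1" using i1 by linarith
          then show "c ! l = 0" using ci by simp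
        qed
        have exs: "\<exists>s. \<forall>l. s \<le> l \<and> l < i \<longrightarrow> c ! l = 0" using Pi by blast
        define s where "s = (LEAST s. \<forall>l. s \<le> l \<and> l < i \<longrightarrow> c ! l = 0)"
        have sP: "\<forall>l. s \<le> l \<and> l < i \<longrightarrow> c ! l = 0" unfolding s_def by (rule LeastI_ex[OF exs])
        have sle: "s \<le> i - 1" unfolding s_def by (rule Least_le) (fact Pi)
        have run: "\<And>l. s \<le> l \<Longrightarrow> l < i + t \<Longrightarrow> c ! l = 0"
        proof -
          fix l assume h: "s \<le> l" "l < i + t"
          show "c ! l = 0"
          proof (cases "l < i")
            case True then show ?thesis using sP h by blast
          next
            case False then show ?thesis using after h by simp
          qed
        qed
        have sne: "s \<noteq> 0"
        proof
          assume "s = 0"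
          then have "c ! 0 = 0" using run i1 by simp
          then show False using c0 by simp
        qed
        have "c ! (s - 1) \<noteq> 0"
        proof
          assume cs: "c ! (s - 1) = 0"
          have "\<forall>l. s - 1 \<le> l \<and> l < i \<longrightarrow> c ! l = 0"
          proof (intro allI impI)
            fix l assume "s - 1 \<le> l \<and> l < i"
            then show "c ! l = 0" using cs sP by (cases "l = s - 1") auto
          qed
          then have "s \<le> s - 1" unfolding s_def by (rule Least_le)
          then show False using sne by simp
        qed
        then have cs1: "c ! (s - 1) = 1" using c01[OF sc, of "s - 1"] sle ik by simp
        have s1: "1 \<le> s" using sne by simp
        have sk: "s < ?k" using sle ik by simp
        have le1: "lle (word_bar 1 (take (?k - s) c)) (drop s c)" by (rule L1[OF s1 sk cs1])
        have lt2: "llt (drop s c) (word_bar 1 (take (?k - s) c))"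
        proof (rule llt_at[of _ _ t])
          show "length (drop s c) = length (word_bar 1 (take (?k - s) c))" using sk by simp
          show "t < length (drop s c)" using tki sle by simp
          fix l assume "l < t"
          then have "c ! l = 1" "c ! (s + l) = 0" using below run sle by auto
          then show "drop s c ! l = word_bar 1 (take (?k - s) c) ! l" using \<open>l < t\<close> tki sle sk by simp
        next
          have "c ! (s + t) = 0" using run sle i1 by simp
          then show "drop s c ! t < word_bar 1 (take (?k - s) c) ! t" using ct tki sle sk by simp
        qed
        show False using le1 lt2 lle_llt_trans llt_irrefl by blast
      qed
    qed
  qed
  have sc': "set c \<subseteq> {0..1}" using sc set01 by simp
  show ?thesis unfolding fundamental_def
  proof (intro conjI disjI1 sc' lc allI impI)
    fix i assume i: "1 \<le> i \<and> i < ?k"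
    have l1: "length (word_bar 1 (take (?k - i) c)) = length (drop i c)" using i by simp
    have l2: "length (drop i c) = length (take (?k - i) c)" using i by simp
    show "word_le (word_bar 1 (take (?k - i) c)) (drop i c)"
      using L[of i] i word_le_lle[OF l1] by simp
    show "word_less (drop i c) (take (?k - i) c)"
      using U[of i] i word_less_llt[OF l2] by simp
  qed
qed




definition edge :: "nat \<Rightarrow> nat \<Rightarrow> nat" where
  "edge p x = (if p = 0 then (if x = 0 then 2 else 3) else (if x = 0 then 1 else 4))"

fun pth :: "nat \<Rightarrow> nat list \<Rightarrow> nat list" where
  "pth p [] = []"
| "pth p (x # xs) = edge p x # pth x xs"

lemma pth_len[simp]: "length (pth p xs) = length xs"
  by (induct xs arbitrary: p) auto

lemma label_edge: "x \<le> 1 \<Longrightarrow> label_a M a (edge p x) = blk M a p x"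
  by (cases "p = 0"; cases "x = 0") (auto simp: edge_def label_a_def blk_def)

lemma star_edge: "x \<le> 1 \<Longrightarrow> label_star (edge p x) = x"
  by (cases "p = 0"; cases "x = 0") (auto simp: edge_def label_star_def)

lemma concat_pth: "set xs \<subseteq> {0,1} \<Longrightarrow> concat (map (label_a M a) (pth p xs)) = phi M a p xs"
proof (induct xs arbitrary: p)
  case Nil then show ?case by simp
next
  case (Cons x xs)
  have "x \<le> 1" using Cons.prems by auto
  then show ?case using Cons label_edge[of x M a p] by simp
qed

lemma star_pth: "set xs \<subseteq> {0,1} \<Longrightarrow> map label_star (pth p xs) = xs"
proof (induct xs arbitrary: p)
  case Nil then show ?case by simp
next
  case (Cons x xs)
  have "x \<le> 1" using Cons.prems by auto
  then show ?case using Cons star_edge[of x p] by simp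
qed

lemma edge_range: "edge p x \<in> {0..4}" by (simp add: edge_def)

lemma tgt_edge: "edge_tgt (edge p x) = (if x = 0 then 2 else 1)"
  by (simp add: edge_def edge_tgt_def)

lemma src_edge: "edge_src (edge p x) = (if p = 0 then 2 else 1)"
  by (simp add: edge_def edge_src_def)

lemma pth_chain: "Suc j < length (pth p xs) \<Longrightarrow> edge_tgt (pth p xs ! j) = edge_src (pth p xs ! Suc j)"
proof (induct xs arbitrary: p j)
  case Nil then show ?case by simp
next
  case (Cons x xs)
  show ?case
  proof (cases j)
    case 0
    obtain y ys where xs: "xs = y # ys" using Cons.prems 0 by (cases xs) auto
    show ?thesis using 0 xs by (simp add: tgt_edge src_edge)
  next
    case (Suc j')
    then show ?thesis using Cons.hyps[where p=x and j=j'] Cons.prems by simp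
  qed
qed

lemma edge_inj:
  assumes "e \<in> {0..4}" "e' \<in> {0..4}" "edge_src e = edge_src e'" "label_star e = label_star e'"
  shows "e = e'"
proof -
  have "e = 0 \<or> e = 1 \<or> e = 2 \<or> e = 3 \<or> e = 4" using assms(1) by auto
  moreover have "e' = 0 \<or> e' = 1 \<or> e' = 2 \<or> e' = 3 \<or> e' = 4" using assms(2) by auto
  ultimately show ?thesis using assms(3,4) by (auto simp: edge_src_def label_star_def)
qed

lemma compose_phi:
  assumes sc: "set c \<subseteq> {0,1}" and ne: "c \<noteq> []" and c0: "c ! 0 = 1"
  shows "compose M a c = phi M a 0 c"
proof -
  obtain cs where c: "c = 1 # cs" using ne c0 by (cases c) auto
  have scs: "set cs \<subseteq> {0,1}" using sc c by simp
  define P where "P = 0 # pth 1 cs"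
  have lP: "length P = length c" unfolding P_def c by simp
  have sP: "map label_star P = c" unfolding P_def c using star_pth[OF scs] by (simp add: label_star_def)
  have rP: "set P \<subseteq> {0..4}"
  proof -
    have "set (pth p xs) \<subseteq> {0..4}" for p xs
      by (induct xs arbitrary: p) (use edge_range in auto)
    then show ?thesis unfolding P_def by auto
  qed
  have chP: "\<forall>j. Suc j < length P \<longrightarrow> edge_tgt (P ! j) = edge_src (P ! Suc j)"
  proof (intro allI impI)
    fix j assume j: "Suc j < length P"
    show "edge_tgt (P ! j) = edge_src (P ! Suc j)"
    proof (cases j)
      case 0
      obtain y ys where cs: "cs = y # ys" using j 0 unfolding P_def by (cases cs) auto
      show ?thesis using 0 cs unfolding P_def by (simp add: src_edge edge_tgt_def)
    next
      case (Suc j')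
      then show ?thesis using pth_chain[of j' 1 cs] j unfolding P_def by simp
    qed
  qed
  have GP: "G_path P" unfolding G_path_def using rP chP by (simp add: P_def)
  have uniq: "Q = P" if GQ: "G_path Q" and sQ: "map label_star Q = c" for Q
  proof -
    have "length (map label_star Q) = length c" using sQ by simp
    then have lQ: "length Q = length P" using lP by simp
    have rQ: "set Q \<subseteq> {0..4}" using GQ unfolding G_path_def by blast
    have chQ: "\<forall>j. Suc j < length Q \<longrightarrow> edge_tgt (Q ! j) = edge_src (Q ! Suc j)"
      using GQ unfolding G_path_def by blast
    have hQ: "Q ! 0 = 0"
    proof -
      have "Q \<noteq> []" "hd Q = 0" using GQ unfolding G_path_def by auto
      then show ?thesis by (simp add: hd_conv_nth)
    qed
    have eq: "j < length Q \<Longrightarrow> Q ! j = P ! j" for j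
    proof (induct j)
      case 0 then show ?case using hQ by (simp add: P_def)
    next
      case (Suc j)
      have IH: "Q ! j = P ! j" using Suc by simp
      have m1: "Q ! Suc j \<in> set Q" by (rule nth_mem[OF Suc.prems])
      have a1: "Q ! Suc j \<in> {0..4}" by (rule subsetD[OF rQ m1])
      have m2: "P ! Suc j \<in> set P" using Suc.prems lQ by simp
      have a2: "P ! Suc j \<in> {0..4}" by (rule subsetD[OF rP m2])
      have "edge_src (Q ! Suc j) = edge_tgt (Q ! j)" using chQ Suc.prems by simp
      also have "\<dots> = edge_tgt (P ! j)" using IH by simp
      also have "\<dots> = edge_src (P ! Suc j)" using chP Suc.prems lQ by simp
      finally have a3: "edge_src (Q ! Suc j) = edge_src (P ! Suc j)" .
      have "label_star (Q ! Suc j) = map label_star Q ! Suc j" using Suc.prems by simp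
      also have "\<dots> = c ! Suc j" using sQ by simp
      also have "\<dots> = map label_star P ! Suc j" using sP by simp
      also have "\<dots> = label_star (P ! Suc j)" using Suc.prems lQ by simp
      finally have a4: "label_star (Q ! Suc j) = label_star (P ! Suc j)" .
      show ?case by (rule edge_inj[OF a1 a2 a3 a4])
    qed
    show ?thesis by (rule nth_equalityI) (use lQ eq in auto)
  qed
  have the: "(THE p. G_path p \<and> map label_star p = c) = P"
  proof (rule the_equality)
    show "G_path P \<and> map label_star P = c" using GP sP by simp
    fix Q assume "G_path Q \<and> map label_star Q = c"
    then show "Q = P" using uniq by blast
  qed
  have "concat (map (label_a M a) P) = phi M a 0 c"
    unfolding P_def c using concat_pth[OF scs, of M a 1] by (simp add: label_a_def blk_def)
  then show ?thesis unfolding compose_def the .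
qed



lemma per_lt_qr:
  assumes fb: "fundamental M b"
  shows "seq_less (per b) (qrseq M b)"
proof -
  have nb: "b \<noteq> []" by (rule fund_cases(4)[OF fb])
  have "llt b (word_plus b)" by (rule llt_plus[OF nb])
  then have "seq_less (conc b (per b)) (conc (word_plus b) (per (word_bar M b)))"
    using seq_less_conc nb by simp
  then show ?thesis using per_conc[OF nb] by (simp add: qrseq_def)
qed

theorem lemma2p13:
  fixes M :: nat and a b :: "nat list"
  assumes "M \<ge> 1"
    and "fundamental M a" and "fundamental M b" and "a \<noteq> b"
    and "J M b \<subset> J M a"
  shows "\<exists>c. fundamental 1 c \<and> b = compose M a c"
proof -
  note M = assms(1) and fa = assms(2) and fb = assms(3) and ab = assms(4)
  have qLa: "qL M a = Qof M (per a)" by (simp add: qL_def Qof_def)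
  have qLb: "qL M b = Qof M (per b)" by (simp add: qL_def Qof_def)
  have qRa: "qR M a = Qof M (qrseq M a)" by (simp add: qR_def Qof_def qrseq_eq)
  have qRb: "qR M b = Qof M (qrseq M b)" by (simp add: qR_def Qof_def qrseq_eq)
  have gpa: "good M (per a)" by (rule good_per[OF fa])
  have gpb: "good M (per b)" by (rule good_per[OF fb])
  have gqa: "good M (qrseq M a)" by (rule good_qr[OF fa])
  have gqb: "good M (qrseq M b)" by (rule good_qr[OF fb])
  have sub: "J M b \<subseteq> J M a" using assms(5) by blast
  have lb: "qL M b \<le> qR M b"
  proof (rule ccontr)
    assume "\<not> qL M b \<le> qR M b"
    then have "Qof M (qrseq M b) \<le> Qof M (per b)" using qLb qRb by simp
    then have "seq_le (qrseq M b) (per b)" by (rule Qof_mono[OF M gqb gpb])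
    then show False using per_lt_qr[OF fb] seq_le_less_trans seq_less_irrefl by blast
  qed
  have "qL M b \<in> J M a" using sub lb by (auto simp: J_def)
  then have l1: "qL M a \<le> qL M b" by (simp add: J_def)
  have "qR M b \<in> J M a" using sub lb by (auto simp: J_def)
  then have l2: "qR M b \<le> qR M a" by (simp add: J_def)
  have H1: "seq_le (per a) (per b)" by (rule Qof_mono[OF M gpa gpb]) (use l1 qLa qLb in simp)
  have H2: "seq_le (qrseq M b) (qrseq M a)" by (rule Qof_mono[OF M gqb gqa]) (use l2 qRa qRb in simp)
  obtain c where c: "2 \<le> length c" "set c \<subseteq> {0,1}" "c ! 0 = 1" "c ! (length c - 1) = 0" "b = phi M a 0 c"
    using comb_parse[OF fa fb ab H1 H2] by blast
  have fc: "fundamental 1 c" by (rule cfund[OF fa fb c(1) c(2) c(3) c(4) c(5)])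
  have cne: "c \<noteq> []" using c(1) by auto
  have "compose M a c = phi M a 0 c" by (rule compose_phi[OF c(2) cne c(3)])
  then have "b = compose M a c" using c(5) by simp
  then show ?thesis using fc by blast
qed

end
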